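(* For indices $\boldsymbol{k}$ and $\boldsymbol{l}$ (tuples of positive integers), the following holds in $\mathfrak{H}^1[[t]]$: $$\widehat{\phi}(z_{\boldsymbol{k}}ш z_{\boldsymbol{l}})=(-1)^{\mathrm{wt}(\boldsymbol{l})}\sum_{\boldsymbol{l}'\in\mathbb{Z}_{\ge0}^{\mathrm{dep}(\boldsymbol{l})}}b\binom{\boldsymbol{l}}{\boldsymbol{l}'}\,\widehat{\phi}\bigl(z_{\boldsymbol{k}}z_{\overline{\boldsymbol{l}+\boldsymbol{l}'}}\bigr)t^{\mathrm{wt}(\boldsymbol{l}')}.$$ In particular $\phi(z_{\boldsymbol{k}}ш z_{\boldsymbol{l}})=(-1)^{\mathrm{wt}(\boldsymbol{l})}\phi(z_{\boldsymbol{k}}z_{\overline{\boldsymbol{l}}})$.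
   Context: $\mathfrak{H}=\mathbb{Q}\langle x,y\rangle$, $\mathfrak{H}^1=\mathbb{Q}+y\mathfrak{H}$, $z_k=yx^{k-1}$, $z_{\boldsymbol{k}}=z_{k_1}\cdots z_{k_r}$, $z_\varnothing=1$. The shuffle product $ш$: $aш1=1шa=a$ and $(a_1u_1)ш(a_2u_2)=(a_1шa_2u_2)u_1+(a_1u_1шa_2)u_2$ for $a_i\in\mathfrak{H}$, $u_i\in\{x,y\}$, extended $\mathbb{Q}[[t]]$-bilinearly. For tuples $\boldsymbol{k}=(k_1,\dots,k_r)$, $\boldsymbol{l}=(l_1,\dots,l_r)$ of nonnegative integers: $\mathrm{wt}(\boldsymbol{k})=\sum k_i$, $\mathrm{dep}(\boldsymbol{k})=r$, $\overline{\boldsymbol{k}}=(k_r,\dots,k_1)$, $\boldsymbol{k}+\boldsymbol{l}$ componentwise, $b\binom{\boldsymbol{k}}{\boldsymbol{l}}=\prod_i\binom{k_i+l_i-1}{l_i}$ with $\binom{l-1}{l}=\delta_{l,0}$, $\boldsymbol{k}_{[i]}=(k_1,\dots,k_i)$, $\boldsymbol{k}^{[i]}=(k_{i+1},\dots,k_r)$. $\widehat{\phi}:\mathfrak{H}^1[[t]]\to\mathfrak{H}^1[[t]]$ is the $\mathbb{Q}[[t]]$-linear map $$\widehat{\phi}(z_{\boldsymbol{k}})=\sum_{i=0}^r(-1)^{\mathrm{wt}(\boldsymbol{k}^{[i]})}z_{\boldsymbol{k}_{[i]}}\,ш\sum_{\boldsymbol{l}\in\mathbb{Z}_{\ge0}^{r-i}}b\binom{\boldsymbol{k}^{[i]}}{\boldsymbol{l}}z_{\overline{\boldsymbol{k}^{[i]}+\boldsymbol{l}}}\,t^{\mathrm{wt}(\boldsymbol{l})},$$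 and $\phi:\mathfrak{H}^1\to\mathfrak{H}^1$ is its constant term in $t$ restricted to $\mathfrak{H}^1$, i.e. $\phi(z_{\boldsymbol{k}})=\sum_{i=0}^r(-1)^{\mathrm{wt}(\boldsymbol{k}^{[i]})}z_{\boldsymbol{k}_{[i]}}ш z_{\overline{\boldsymbol{k}^{[i]}}}$. *)

theory Defs
  imports Complex_Main
begin

text \<open>Elements of the free algebra
  H = Q<x,y> are represented by their (finitely supported) coefficient functions
  word => rat; elements of H[[t]] by functions nat => word => rat, where
  F n is the coefficient of t^n.\<close>

datatype letter = X | Y

type_synonym word = "letter list"
type_synonym poly = "word \<Rightarrow> rat"
type_synonym pser = "nat \<Rightarrow> word \<Rightarrow> rat"

text \<open>Shuffle of words (multiset of resulting words, as a list), following the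
  recursion (a1 u1) sh (a2 u2) = (a1 sh a2 u2) u1 + (a1 u1 sh a2) u2 on last letters.
  shw_rev works on reversed words.\<close>
fun shw_rev :: "word \<Rightarrow> word \<Rightarrow> word list" where
  "shw_rev [] v = [v]"
| "shw_rev u [] = [u]"
| "shw_rev (a # u) (b # v) =
     map ((#) a) (shw_rev u (b # v)) @ map ((#) b) (shw_rev (a # u) v)"

definition shw :: "word \<Rightarrow> word \<Rightarrow> word list" where
  "shw u v = map rev (shw_rev (rev u) (rev v))"

definition supp :: "poly \<Rightarrow> word set" where
  "supp P = {w. P w \<noteq> 0}"

definition sh :: "poly \<Rightarrow> poly \<Rightarrow> poly" where
  "sh P Q = (\<lambda>w. \<Sum>u\<in>supp P. \<Sum>v\<in>supp Q. P u * Q v * of_nat (count_list (shw u v) w))"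

definition mon :: "word \<Rightarrow> poly" where
  "mon w = (\<lambda>v. if v = w then 1 else 0)"

definition zw :: "nat list \<Rightarrow> word" where
  "zw ks = concat (map (\<lambda>k. Y # replicate (k - 1) X) ks)"

definition wt :: "nat list \<Rightarrow> nat" where
  "wt ks = sum_list ks"

definition ladd :: "nat list \<Rightarrow> nat list \<Rightarrow> nat list" where
  "ladd ks ls = map2 (+) ks ls"

text \<open>b(k;l) = prod (k_i + l_i - 1 choose l_i); with natural subtraction this gives
  the convention (l-1 choose l) = delta_{l,0} for k_i = 0.\<close>
definition bb :: "nat list \<Rightarrow> nat list \<Rightarrow> nat" where
  "bb ks ls = prod_list (map2 (\<lambda>k l. (k + l - 1) choose l) ks ls)"

definition tuples :: "nat \<Rightarrow> nat \<Rightarrow> nat list set" where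
  "tuples r n = {ls. length ls = r \<and> sum_list ls = n}"

text \<open>The series sum_{l in Z_{>=0}^r} f(l) t^{wt l}, where each f(l) is in H[[t]].\<close>
definition tsum_tuples :: "nat \<Rightarrow> (nat list \<Rightarrow> pser) \<Rightarrow> pser" where
  "tsum_tuples r f = (\<lambda>n w. \<Sum>m\<le>n. \<Sum>ls\<in>tuples r m. f ls (n - m) w)"

definition const_ser :: "poly \<Rightarrow> pser" where
  "const_ser P = (\<lambda>n. if n = 0 then P else (\<lambda>_. 0))"

definition shS :: "pser \<Rightarrow> pser \<Rightarrow> pser" where
  "shS F G = (\<lambda>n w. \<Sum>m\<le>n. sh (F m) (G (n - m)) w)"

definition phihat_idx :: "nat list \<Rightarrow> pser" where
  "phihat_idx ks = (\<lambda>n w. \<Sum>i\<le>length ks.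
     (- 1) ^ wt (drop i ks) *
     shS (const_ser (mon (zw (take i ks))))
         (tsum_tuples (length ks - i)
            (\<lambda>ls. const_ser (\<lambda>v. of_nat (bb (drop i ks) ls) *
                              mon (zw (rev (ladd (drop i ks) ls))) v))) n w)"

definition idx :: "word \<Rightarrow> nat list" where
  "idx w = (THE ks. (\<forall>k\<in>set ks. 0 < k) \<and> zw ks = w)"

definition phihat :: "pser \<Rightarrow> pser" where
  "phihat F = (\<lambda>n w. \<Sum>m\<le>n. \<Sum>u\<in>supp (F m). F m u * phihat_idx (idx u) (n - m) w)"

definition phi :: "poly \<Rightarrow> poly" where
  "phi P = phihat (const_ser P) 0"

end

theory Submission
  imports Defs "HOL-Computational_Algebra.Formal_Power_Series"
begin


type_synonym ser = "word \<Rightarrow> rat fps"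

fun shuf :: "ser \<Rightarrow> ser \<Rightarrow> ser" where
  "shuf F G [] = F [] * G []"
| "shuf F G (a # w) = shuf (\<lambda>v. F (a # v)) G w + shuf F (\<lambda>v. G (a # v)) w"

declare shuf.simps(2)[simp del]

lemma shuf_Cons: "shuf F G (a # w) = shuf (\<lambda>v. F (a # v)) G w + shuf F (\<lambda>v. G (a # v)) w"
  by (rule shuf.simps(2))

lemma shuf_zero1_p: "shuf (\<lambda>w. 0) H v = 0"
  by (induction v arbitrary: H) (simp_all add: shuf_Cons)
lemma shuf_zero1[simp]: "shuf (\<lambda>w. 0) H = (\<lambda>v. 0)"
  by (rule ext) (rule shuf_zero1_p)
lemma shuf_zero2_p: "shuf H (\<lambda>w. 0) v = 0"
  by (induction v arbitrary: H) (simp_all add: shuf_Cons)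
lemma shuf_zero2[simp]: "shuf H (\<lambda>w. 0) = (\<lambda>v. 0)"
  by (rule ext) (rule shuf_zero2_p)

lemma shuf_add1_p: "shuf (\<lambda>w. F w + G w) H v = shuf F H v + shuf G H v"
  by (induction v arbitrary: F G H) (simp_all add: shuf_Cons algebra_simps)
lemma shuf_add1[simp]: "shuf (\<lambda>w. F w + G w) H = (\<lambda>v. shuf F H v + shuf G H v)"
  by (rule ext) (rule shuf_add1_p)
lemma shuf_add2_p: "shuf H (\<lambda>w. F w + G w) v = shuf H F v + shuf H G v"
  by (induction v arbitrary: F G H) (simp_all add: shuf_Cons algebra_simps)
lemma shuf_add2[simp]: "shuf H (\<lambda>w. F w + G w) = (\<lambda>v. shuf H F v + shuf H G v)"
  by (rule ext) (rule shuf_add2_p)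
lemma shuf_diff1_p: "shuf (\<lambda>w. F w - G w) H v = shuf F H v - shuf G H v"
  by (induction v arbitrary: F G H) (simp_all add: shuf_Cons algebra_simps)
lemma shuf_diff1[simp]: "shuf (\<lambda>w. F w - G w) H = (\<lambda>v. shuf F H v - shuf G H v)"
  by (rule ext) (rule shuf_diff1_p)
lemma shuf_diff2_p: "shuf H (\<lambda>w. F w - G w) v = shuf H F v - shuf H G v"
  by (induction v arbitrary: F G H) (simp_all add: shuf_Cons algebra_simps)
lemma shuf_diff2[simp]: "shuf H (\<lambda>w. F w - G w) = (\<lambda>v. shuf H F v - shuf H G v)"
  by (rule ext) (rule shuf_diff2_p)
lemma shuf_neg1_p: "shuf (\<lambda>w. - F w) H v = - shuf F H v"
  by (induction v arbitrary: F H) (simp_all add: shuf_Cons algebra_simps)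
lemma shuf_neg1[simp]: "shuf (\<lambda>w. - F w) H = (\<lambda>v. - shuf F H v)"
  by (rule ext) (rule shuf_neg1_p)
lemma shuf_neg2_p: "shuf H (\<lambda>w. - F w) v = - shuf H F v"
  by (induction v arbitrary: F H) (simp_all add: shuf_Cons algebra_simps)
lemma shuf_neg2[simp]: "shuf H (\<lambda>w. - F w) = (\<lambda>v. - shuf H F v)"
  by (rule ext) (rule shuf_neg2_p)
lemma shuf_scal1_p: "shuf (\<lambda>w. c * F w) H v = c * shuf F H v"
  by (induction v arbitrary: F H) (simp_all add: shuf_Cons algebra_simps)
lemma shuf_scal1[simp]: "shuf (\<lambda>w. c * F w) H = (\<lambda>v. c * shuf F H v)"
  by (rule ext) (rule shuf_scal1_p)
lemma shuf_scal2_p: "shuf H (\<lambda>w. c * F w) v = c * shuf H F v"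
  by (induction v arbitrary: F H) (simp_all add: shuf_Cons algebra_simps)
lemma shuf_scal2[simp]: "shuf H (\<lambda>w. c * F w) = (\<lambda>v. c * shuf H F v)"
  by (rule ext) (rule shuf_scal2_p)

lemma shuf_rscal1[simp]: "shuf (\<lambda>w. F w * c) H = (\<lambda>v. c * shuf F H v)"
  by (simp add: mult.commute)
lemma shuf_rscal2[simp]: "shuf H (\<lambda>w. F w * c) = (\<lambda>v. c * shuf H F v)"
  by (simp add: mult.commute)

lemma shuf_comm: "shuf F G v = shuf G F v"
  by (induction v arbitrary: F G) (simp_all add: shuf_Cons algebra_simps)

lemma shuf_assoc: "shuf (shuf F G) H v = shuf F (shuf G H) v"
  by (induction v arbitrary: F G H) (simp_all add: shuf_Cons algebra_simps)

lemma shuf_snoc: "shuf F G (v @ [a]) = shuf (\<lambda>u. F (u @ [a])) G v + shuf F (\<lambda>u. G (u @ [a])) v"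
  by (induction v arbitrary: F G) (simp_all add: shuf_Cons algebra_simps)

definition dlt :: "word \<Rightarrow> ser" where "dlt u = (\<lambda>w. if w = u then 1 else 0)"

lemma shuf_unit1[simp]: "shuf (dlt []) F v = F v"
proof (induction v arbitrary: F)
  case Nil then show ?case by (simp add: dlt_def)
next
  case (Cons a v)
  have "(\<lambda>u. dlt [] (a # u)) = (\<lambda>u. 0)" by (simp add: dlt_def)
  then show ?case by (simp add: shuf_Cons Cons)
qed

lemma shuf_unit2[simp]: "shuf F (dlt []) v = F v"
  using shuf_unit1 shuf_comm by metis

fun cat :: "ser \<Rightarrow> ser \<Rightarrow> ser" where
  "cat F G [] = F [] * G []"
| "cat F G (a # w) = cat (\<lambda>v. F (a # v)) G w + F [] * G (a # w)"

declare cat.simps(2)[simp del]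
lemma cat_Cons: "cat F G (a # w) = cat (\<lambda>v. F (a # v)) G w + F [] * G (a # w)"
  by (rule cat.simps(2))

lemma cat_zero1_p: "cat (\<lambda>w. 0) H v = 0"
  by (induction v arbitrary: H) (simp_all add: cat_Cons)
lemma cat_zero1[simp]: "cat (\<lambda>w. 0) H = (\<lambda>v. 0)"
  by (rule ext) (rule cat_zero1_p)
lemma cat_zero2_p: "cat H (\<lambda>w. 0) v = 0"
  by (induction v arbitrary: H) (simp_all add: cat_Cons)
lemma cat_zero2[simp]: "cat H (\<lambda>w. 0) = (\<lambda>v. 0)"
  by (rule ext) (rule cat_zero2_p)
lemma cat_add1_p: "cat (\<lambda>w. F w + G w) H v = cat F H v + cat G H v"
  by (induction v arbitrary: F G H) (simp_all add: cat_Cons algebra_simps)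
lemma cat_add1[simp]: "cat (\<lambda>w. F w + G w) H = (\<lambda>v. cat F H v + cat G H v)"
  by (rule ext) (rule cat_add1_p)
lemma cat_add2_p: "cat H (\<lambda>w. F w + G w) v = cat H F v + cat H G v"
  by (induction v arbitrary: F G H) (simp_all add: cat_Cons algebra_simps)
lemma cat_add2[simp]: "cat H (\<lambda>w. F w + G w) = (\<lambda>v. cat H F v + cat H G v)"
  by (rule ext) (rule cat_add2_p)
lemma cat_diff1_p: "cat (\<lambda>w. F w - G w) H v = cat F H v - cat G H v"
  by (induction v arbitrary: F G H) (simp_all add: cat_Cons algebra_simps)
lemma cat_diff1[simp]: "cat (\<lambda>w. F w - G w) H = (\<lambda>v. cat F H v - cat G H v)"
  by (rule ext) (rule cat_diff1_p)
lemma cat_diff2_p: "cat H (\<lambda>w. F w - G w) v = cat H F v - cat H G v"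
  by (induction v arbitrary: F G H) (simp_all add: cat_Cons algebra_simps)
lemma cat_diff2[simp]: "cat H (\<lambda>w. F w - G w) = (\<lambda>v. cat H F v - cat H G v)"
  by (rule ext) (rule cat_diff2_p)
lemma cat_neg1_p: "cat (\<lambda>w. - F w) H v = - cat F H v"
  by (induction v arbitrary: F H) (simp_all add: cat_Cons algebra_simps)
lemma cat_neg1[simp]: "cat (\<lambda>w. - F w) H = (\<lambda>v. - cat F H v)"
  by (rule ext) (rule cat_neg1_p)
lemma cat_neg2_p: "cat H (\<lambda>w. - F w) v = - cat H F v"
  by (induction v arbitrary: F H) (simp_all add: cat_Cons algebra_simps)
lemma cat_neg2[simp]: "cat H (\<lambda>w. - F w) = (\<lambda>v. - cat H F v)"
  by (rule ext) (rule cat_neg2_p)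
lemma cat_scal1_p: "cat (\<lambda>w. c * F w) H v = c * cat F H v"
  by (induction v arbitrary: F H) (simp_all add: cat_Cons algebra_simps)
lemma cat_scal1[simp]: "cat (\<lambda>w. c * F w) H = (\<lambda>v. c * cat F H v)"
  by (rule ext) (rule cat_scal1_p)
lemma cat_scal2_p: "cat H (\<lambda>w. c * F w) v = c * cat H F v"
  by (induction v arbitrary: F H) (simp_all add: cat_Cons algebra_simps)
lemma cat_scal2[simp]: "cat H (\<lambda>w. c * F w) = (\<lambda>v. c * cat H F v)"
  by (rule ext) (rule cat_scal2_p)

lemma cat_rscal1[simp]: "cat (\<lambda>w. F w * c) H = (\<lambda>v. c * cat F H v)"
  by (simp add: mult.commute)
lemma cat_rscal2[simp]: "cat H (\<lambda>w. F w * c) = (\<lambda>v. c * cat H F v)"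
  by (simp add: mult.commute)

lemma cat_snoc: "cat F G (v @ [a]) = cat F (\<lambda>u. G (u @ [a])) v + G [] * F (v @ [a])"
  by (induction v arbitrary: F G) (simp_all add: cat_Cons algebra_simps)

lemma cat_unit1[simp]: "cat (dlt []) F v = F v"
proof (induction v arbitrary: F)
  case Nil then show ?case by (simp add: dlt_def)
next
  case (Cons a v)
  have "(\<lambda>u. dlt [] (a # u)) = (\<lambda>u. 0)" by (simp add: dlt_def)
  then show ?case by (simp add: cat_Cons dlt_def)
qed

lemma cat_unit2[simp]: "cat F (dlt []) v = F v"
proof (induction v arbitrary: F)
  case Nil then show ?case by (simp add: dlt_def)
next
  case (Cons a v)
  then show ?case by (simp add: cat_Cons dlt_def)
qed

lemma cat_assoc: "cat (cat F G) H v = cat F (cat G H) v"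
  by (induction v arbitrary: F G H) (simp_all add: cat_Cons algebra_simps)

lemma cat_explicit: "cat F G w = (\<Sum>i\<le>length w. F (take i w) * G (drop i w))"
proof (induction w arbitrary: F)
  case Nil then show ?case by simp
next
  case (Cons a w)
  show ?case by (simp add: cat_Cons Cons sum.atMost_Suc_shift del: sum.atMost_Suc)
qed

lemma cat_dlt1: "cat (dlt u) G w = (if take (length u) w = u then G (drop (length u) w) else 0)"
proof (induction w arbitrary: u)
  case Nil then show ?case by (simp add: dlt_def)
next
  case (Cons a w)
  show ?case
  proof (cases u)
    case Nil then show ?thesis by simp
  next
    case (Cons b u')
    have "(\<lambda>v. dlt u (a # v)) = (if a = b then dlt u' else (\<lambda>v. 0))"
      using Cons by (auto simp: dlt_def)
    then show ?thesis using Cons Cons.IH by (simp add: cat_Cons dlt_def)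
  qed
qed

lemma cat_dlt_dlt: "cat (dlt u) (dlt v) w = dlt (u @ v) w"
proof (cases "take (length u) w = u")
  case True
  then have w: "w = u @ drop (length u) w" by (metis append_take_drop_id)
  have "(w = u @ v) = (drop (length u) w = v)"
    by (subst w) simp
  moreover have "cat (dlt u) (dlt v) w = dlt v (drop (length u) w)" using True by (simp add: cat_dlt1)
  ultimately show ?thesis by (simp add: dlt_def)
next
  case False
  then have "w \<noteq> u @ v" by auto
  moreover have "cat (dlt u) (dlt v) w = 0" using False by (simp add: cat_dlt1)
  ultimately show ?thesis by (simp add: dlt_def)
qed



definition rho :: ser where
  "rho w = (if w = replicate (length w) X then fps_X ^ length w else 0)"

lemma rho_Nil[simp]: "rho [] = 1" by (simp add: rho_def)
lemma rho_X[simp]: "rho (X # w) = fps_X * rho w" by (simp add: rho_def)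
lemma rho_Y[simp]: "rho (Y # w) = 0" by (simp add: rho_def)

definition xs :: "(nat \<Rightarrow> rat fps) \<Rightarrow> ser" where
  "xs f w = (if w = replicate (length w) X then f (length w) else 0)"

lemma xs_Nil[simp]: "xs f [] = f 0" by (simp add: xs_def)
lemma xs_X[simp]: "xs f (X # w) = xs (\<lambda>n. f (Suc n)) w" by (simp add: xs_def)
lemma xs_Y[simp]: "xs f (Y # w) = 0" by (simp add: xs_def)
lemma replicate_snoc_iff: "(w @ [a] = replicate (length (w @ [a])) b) = (w = replicate (length w) b \<and> a = b)"
  by (induction w) auto
lemma xs_snoc_X[simp]: "xs f (w @ [X]) = xs (\<lambda>n. f (Suc n)) w"
  by (simp only: xs_def replicate_snoc_iff) simp
lemma xs_snoc_Y[simp]: "xs f (w @ [Y]) = 0"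
  by (simp only: xs_def replicate_snoc_iff) simp

lemma xs_add: "xs (\<lambda>n. f n + g n) = (\<lambda>w. xs f w + xs g w)" by (auto simp: xs_def)
lemma xs_diff: "xs (\<lambda>n. f n - g n) = (\<lambda>w. xs f w - xs g w)" by (auto simp: xs_def)
lemma xs_scal: "xs (\<lambda>n. c * f n) = (\<lambda>w. c * xs f w)" by (auto simp: xs_def)
lemma xs_neg: "xs (\<lambda>n. - f n) = (\<lambda>w. - xs f w)" by (auto simp: xs_def)
lemmas xs_lin = xs_add xs_diff xs_scal xs_neg

definition ypre :: "ser \<Rightarrow> ser" where
  "ypre Q w = (case w of Y # v \<Rightarrow> Q v | _ \<Rightarrow> 0)"

lemma ypre_Nil[simp]: "ypre Q [] = 0" by (simp add: ypre_def)
lemma ypre_Y[simp]: "ypre Q (Y # v) = Q v" by (simp add: ypre_def)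
lemma ypre_X[simp]: "ypre Q (X # v) = 0" by (simp add: ypre_def)

lemma ypre_snoc_X: "(\<lambda>u. ypre Q (u @ [X])) = ypre (\<lambda>v. Q (v @ [X]))"
proof
  fix u show "ypre Q (u @ [X]) = ypre (\<lambda>v. Q (v @ [X])) u"
    by (cases u) (auto simp: ypre_def split: letter.splits list.splits)
qed
lemma ypre_snoc_Y: "(\<lambda>u. ypre Q (u @ [Y])) = (\<lambda>u. ypre (\<lambda>v. Q (v @ [Y])) u + Q [] * dlt [] u)"
proof
  fix u show "ypre Q (u @ [Y]) = ypre (\<lambda>v. Q (v @ [Y])) u + Q [] * dlt [] u"
    by (cases u) (auto simp: ypre_def dlt_def split: letter.splits list.splits)
qed

lemma ypre_zero[simp]: "ypre (\<lambda>w. 0) = (\<lambda>w. 0)"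
  by (auto simp: ypre_def split: list.splits letter.splits)
lemma xs_zero[simp]: "xs (\<lambda>n. 0) = (\<lambda>w. 0)"
  by (auto simp: xs_def)

lemma ypre_add: "ypre (\<lambda>w. F w + G w) = (\<lambda>w. ypre F w + ypre G w)"
  by (auto simp: ypre_def split: list.splits letter.splits)
lemma ypre_diff: "ypre (\<lambda>w. F w - G w) = (\<lambda>w. ypre F w - ypre G w)"
  by (auto simp: ypre_def split: list.splits letter.splits)
lemma ypre_scal: "ypre (\<lambda>w. c * F w) = (\<lambda>w. c * ypre F w)"
  by (auto simp: ypre_def split: list.splits letter.splits)
lemma ypre_neg: "ypre (\<lambda>w. - F w) = (\<lambda>w. - ypre F w)"
  by (auto simp: ypre_def split: list.splits letter.splits)
lemmas ypre_lin = ypre_add ypre_diff ypre_scal ypre_neg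

fun Ky :: "ser \<Rightarrow> ser" where
  "Ky F [] = F [Y]"
| "Ky F (a # w) = Ky (\<lambda>v. F (a # v)) w - Ky (\<lambda>v. F (v @ [a])) w"

lemma Ky_zero_p: "Ky (\<lambda>w. 0) v = 0"
  by (induction v) simp_all
lemma Ky_zero[simp]: "Ky (\<lambda>w. 0) = (\<lambda>v. 0)"
  by (rule ext) (rule Ky_zero_p)
lemma Ky_add_p: "Ky (\<lambda>w. F w + G w) v = Ky F v + Ky G v"
  by (induction v arbitrary: F G) (simp_all add: algebra_simps)
lemma Ky_add[simp]: "Ky (\<lambda>w. F w + G w) = (\<lambda>v. Ky F v + Ky G v)"
  by (rule ext) (rule Ky_add_p)
lemma Ky_diff_p: "Ky (\<lambda>w. F w - G w) v = Ky F v - Ky G v"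
  by (induction v arbitrary: F G) (simp_all add: algebra_simps)
lemma Ky_diff[simp]: "Ky (\<lambda>w. F w - G w) = (\<lambda>v. Ky F v - Ky G v)"
  by (rule ext) (rule Ky_diff_p)
lemma Ky_neg_p: "Ky (\<lambda>w. - F w) v = - Ky F v"
  by (induction v arbitrary: F) (simp_all add: algebra_simps)
lemma Ky_neg[simp]: "Ky (\<lambda>w. - F w) = (\<lambda>v. - Ky F v)"
  by (rule ext) (rule Ky_neg_p)
lemma Ky_scal_p: "Ky (\<lambda>w. c * F w) v = c * Ky F v"
  by (induction v arbitrary: F) (simp_all add: algebra_simps)
lemma Ky_scal[simp]: "Ky (\<lambda>w. c * F w) = (\<lambda>v. c * Ky F v)"
  by (rule ext) (rule Ky_scal_p)

lemma Ky_rscal[simp]: "Ky (\<lambda>w. F w * c) = (\<lambda>v. c * Ky F v)"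
  by (simp add: mult.commute)

lemma Ky_shuf: "Ky (shuf F G) v = Ky F v * G [] + F [] * Ky G v"
proof (induction v arbitrary: F G)
  case Nil then show ?case by (simp add: shuf_Cons)
next
  case (Cons a v)
  show ?case by (simp add: shuf_Cons shuf_snoc Cons algebra_simps)
qed

lemma Ky_xs[simp]: "Ky (xs f) v = 0"
proof (induction v arbitrary: f)
  case Nil then show ?case by simp
next
  case (Cons a v)
  show ?case by (cases a) simp_all
qed

lemma Ky_shuf_fun: "Ky (shuf F G) = (\<lambda>v. Ky F v * G [] + F [] * Ky G v)"
  by (rule ext) (rule Ky_shuf)
lemma Ky_xs_fun[simp]: "Ky (xs f) = (\<lambda>v. 0)"
  by (rule ext) simp

fun Phi :: "ser \<Rightarrow> ser" where
  "Phi F [] = F []"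
| "Phi F (a # w) = Phi (\<lambda>v. F (a # v)) w - (if a = Y then shuf rho (Ky F) w else 0)"

lemma Phi_zero_p: "Phi (\<lambda>w. 0) v = 0"
  by (induction v) simp_all
lemma Phi_zero[simp]: "Phi (\<lambda>w. 0) = (\<lambda>v. 0)"
  by (rule ext) (rule Phi_zero_p)
lemma Phi_add_p: "Phi (\<lambda>w. F w + G w) v = Phi F v + Phi G v"
  by (induction v arbitrary: F G) (simp_all add: algebra_simps)
lemma Phi_add[simp]: "Phi (\<lambda>w. F w + G w) = (\<lambda>v. Phi F v + Phi G v)"
  by (rule ext) (rule Phi_add_p)
lemma Phi_diff_p: "Phi (\<lambda>w. F w - G w) v = Phi F v - Phi G v"
  by (induction v arbitrary: F G) (simp_all add: algebra_simps)
lemma Phi_diff[simp]: "Phi (\<lambda>w. F w - G w) = (\<lambda>v. Phi F v - Phi G v)"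
  by (rule ext) (rule Phi_diff_p)
lemma Phi_neg_p: "Phi (\<lambda>w. - F w) v = - Phi F v"
  by (induction v arbitrary: F) (simp_all add: algebra_simps)
lemma Phi_neg[simp]: "Phi (\<lambda>w. - F w) = (\<lambda>v. - Phi F v)"
  by (rule ext) (rule Phi_neg_p)
lemma Phi_scal_p: "Phi (\<lambda>w. c * F w) v = c * Phi F v"
  by (induction v arbitrary: F) (simp_all add: algebra_simps)
lemma Phi_scal[simp]: "Phi (\<lambda>w. c * F w) = (\<lambda>v. c * Phi F v)"
  by (rule ext) (rule Phi_scal_p)

lemma Phi_rscal[simp]: "Phi (\<lambda>w. F w * c) = (\<lambda>v. c * Phi F v)"
  by (simp add: mult.commute)

fun sig :: "(nat \<Rightarrow> rat fps) \<Rightarrow> nat \<Rightarrow> rat fps" where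
  "sig f 0 = - f 0"
| "sig f (Suc n) = fps_X * sig f n - sig (\<lambda>k. f (Suc k)) n"

lemma sig_diff: "sig (\<lambda>k. f k - g k) n = sig f n - sig g n"
proof (induction n arbitrary: f g)
  case (Suc n) then show ?case by (simp only: sig.simps Suc.IH) (simp add: algebra_simps)
qed simp
lemma sig_scal: "sig (\<lambda>k. c * f k) n = c * sig f n"
proof (induction n arbitrary: f)
  case (Suc n) then show ?case by (simp only: sig.simps Suc.IH) (simp add: algebra_simps)
qed simp

definition Prel :: "(nat \<Rightarrow> rat fps) \<Rightarrow> (nat \<Rightarrow> rat fps) \<Rightarrow> bool" where
  "Prel f g \<longleftrightarrow> (g = sig f \<or> f = sig g)"

lemma Prel_0: "Prel f g \<Longrightarrow> g 0 = - f 0"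
  by (auto simp: Prel_def)

lemma Prel_Suc: "Prel f g \<Longrightarrow> Prel (\<lambda>n. f (Suc n)) (\<lambda>n. fps_X * g n - g (Suc n))"
  unfolding Prel_def
proof (elim disjE)
  assume g: "g = sig f"
  have "(\<lambda>n. fps_X * g n - g (Suc n)) = sig (\<lambda>n. f (Suc n))"
    by (rule ext) (simp add: g)
  then show "(\<lambda>n. fps_X * g n - g (Suc n)) = sig (\<lambda>n. f (Suc n)) \<or> (\<lambda>n. f (Suc n)) = sig (\<lambda>n. fps_X * g n - g (Suc n))"
    by blast
next
  assume f: "f = sig g"
  have "(\<lambda>n. f (Suc n)) = sig (\<lambda>n. fps_X * g n - g (Suc n))"
    by (rule ext) (simp add: f sig_diff sig_scal)
  then show "(\<lambda>n. fps_X * g n - g (Suc n)) = sig (\<lambda>n. f (Suc n)) \<or> (\<lambda>n. f (Suc n)) = sig (\<lambda>n. fps_X * g n - g (Suc n))"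
    by blast
qed



lemma lemC: "Prel f g \<Longrightarrow> Phi (shuf A (xs f)) w = - shuf rho (Ky (cat A (ypre (xs g)))) w"
proof (induction w arbitrary: A f g)
  case Nil
  show ?case using Prel_0[OF Nil] by (simp add: cat_Cons)
next
  case (Cons a w)
  show ?case
  proof (cases a)
    case X
    have IH1: "Phi (shuf (\<lambda>v. A (X#v)) (xs f)) w = - shuf rho (Ky (cat (\<lambda>v. A (X#v)) (ypre (xs g)))) w"
      using Cons.IH Cons.prems by blast
    have IH2: "Phi (shuf A (xs (\<lambda>n. f (Suc n)))) w = - shuf rho (Ky (cat A (ypre (xs (\<lambda>n. fps_X * g n - g (Suc n)))))) w"
      using Cons.IH Prel_Suc[OF Cons.prems] by blast
    have L: "Phi (shuf A (xs f)) (X # w) = Phi (shuf (\<lambda>v. A (X#v)) (xs f)) w + Phi (shuf A (xs (\<lambda>n. f (Suc n)))) w"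
      by (simp add: shuf_Cons)
    have R: "shuf rho (Ky (cat A (ypre (xs g)))) (X # w) = fps_X * shuf rho (Ky (cat A (ypre (xs g)))) w
       + shuf rho (Ky (cat (\<lambda>v. A (X#v)) (ypre (xs g)))) w - shuf rho (Ky (cat A (ypre (xs (\<lambda>n. g (Suc n)))))) w"
      by (simp add: shuf_Cons cat_Cons cat_snoc ypre_snoc_X)
    have R2: "shuf rho (Ky (cat A (ypre (xs (\<lambda>n. fps_X * g n - g (Suc n)))))) w
       = fps_X * shuf rho (Ky (cat A (ypre (xs g)))) w - shuf rho (Ky (cat A (ypre (xs (\<lambda>n. g (Suc n)))))) w"
      by (simp add: xs_lin ypre_lin)
    show ?thesis unfolding X L IH1 IH2 R R2 by (simp add: algebra_simps)
  next
    case Y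
    have IH1: "Phi (shuf (\<lambda>v. A (Y#v)) (xs f)) w = - shuf rho (Ky (cat (\<lambda>v. A (Y#v)) (ypre (xs g)))) w"
      using Cons.IH Cons.prems by blast
    have g0: "g 0 = - f 0" using Prel_0[OF Cons.prems] .
    have L: "Phi (shuf A (xs f)) (Y # w) = Phi (shuf (\<lambda>v. A (Y#v)) (xs f)) w - f 0 * shuf rho (Ky A) w"
      by (simp add: shuf_Cons Ky_shuf_fun)
    have R: "shuf rho (Ky (cat A (ypre (xs g)))) (Y # w) = 
       shuf rho (Ky (cat (\<lambda>v. A (Y#v)) (ypre (xs g)))) w - g 0 * shuf rho (Ky A) w"
      by (simp add: shuf_Cons cat_Cons cat_snoc ypre_snoc_Y)
    show ?thesis unfolding Y L R IH1 g0 by (simp add: algebra_simps)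
  qed
qed

lemma Prel_sig1: "Prel f (sig f)" by (simp add: Prel_def)
lemma Prel_sig2: "Prel (sig f) f" by (simp add: Prel_def)

lemma shuf_comm_fun: "shuf F G = shuf G F"
  by (rule ext) (rule shuf_comm)

lemma lemB: "Phi (shuf A (cat B (ypre (xs f)))) w = Phi (shuf (cat A (ypre (xs (sig f)))) B) w"
proof (induction w arbitrary: A B)
  case Nil
  show ?case by simp
next
  case (Cons a w)
  show ?case
  proof (cases a)
    case X
    have L: "Phi (shuf A (cat B (ypre (xs f)))) (X # w) = Phi (shuf (\<lambda>v. A (X#v)) (cat B (ypre (xs f)))) w
        + Phi (shuf A (cat (\<lambda>v. B (X#v)) (ypre (xs f)))) w"
      by (simp add: shuf_Cons cat_Cons)
    have R: "Phi (shuf (cat A (ypre (xs (sig f)))) B) (X # w) = Phi (shuf (cat (\<lambda>v. A (X#v)) (ypre (xs (sig f)))) B) w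
        + Phi (shuf (cat A (ypre (xs (sig f)))) (\<lambda>v. B (X#v))) w"
      by (simp add: shuf_Cons cat_Cons)
    show ?thesis unfolding X L R Cons.IH ..
  next
    case Y
    have L: "Phi (shuf A (cat B (ypre (xs f)))) (Y # w) = Phi (shuf (\<lambda>v. A (Y#v)) (cat B (ypre (xs f)))) w
        + Phi (shuf A (cat (\<lambda>v. B (Y#v)) (ypre (xs f)))) w + B [] * Phi (shuf A (xs f)) w
        - A [] * shuf rho (Ky (cat B (ypre (xs f)))) w"
      by (simp add: shuf_Cons cat_Cons Ky_shuf_fun)
    have R: "Phi (shuf (cat A (ypre (xs (sig f)))) B) (Y # w) = Phi (shuf (cat (\<lambda>v. A (Y#v)) (ypre (xs (sig f)))) B) w
        + A [] * Phi (shuf (xs (sig f)) B) w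
        + Phi (shuf (cat A (ypre (xs (sig f)))) (\<lambda>v. B (Y#v))) w 
        - B [] * shuf rho (Ky (cat A (ypre (xs (sig f))))) w"
      by (simp add: shuf_Cons cat_Cons Ky_shuf_fun)
    have C1: "Phi (shuf A (xs f)) w = - shuf rho (Ky (cat A (ypre (xs (sig f))))) w"
      by (rule lemC[OF Prel_sig1])
    have C2: "Phi (shuf (xs (sig f)) B) w = - shuf rho (Ky (cat B (ypre (xs f)))) w"
      by (subst shuf_comm_fun) (rule lemC[OF Prel_sig2])
    show ?thesis unfolding Y L R Cons.IH C1 C2 by (simp add: algebra_simps)
  qed
qed

definition e :: "nat \<Rightarrow> nat \<Rightarrow> rat fps" where "e j = (\<lambda>n. if n = j then 1 else 0)"
definition sblk :: "nat \<Rightarrow> ser" where "sblk m = ypre (xs (sig (e (m - 1))))"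

fun Tb :: "nat list \<Rightarrow> ser" where
  "Tb [] = dlt []"
| "Tb (k # ks) = cat (Tb ks) (sblk k)"

lemma cat_unit1_fun[simp]: "cat (dlt []) F = F" by (rule ext) simp
lemma cat_unit2_fun[simp]: "cat F (dlt []) = F" by (rule ext) simp
lemma cat_assoc_fun: "cat (cat F G) H = cat F (cat G H)" by (rule ext) (rule cat_assoc)
lemma cat_dlt_dlt_fun: "cat (dlt u) (dlt v) = dlt (u @ v)" by (rule ext) (rule cat_dlt_dlt)
lemma shuf_unit2_fun[simp]: "shuf F (dlt []) = F" by (rule ext) simp

lemma Tb_snoc: "Tb (ms @ [m]) = cat (sblk m) (Tb ms)"
  by (induction ms) (simp_all add: cat_assoc_fun)

lemma zw_snoc: "zw (ms @ [m]) = zw ms @ zw [m]"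
  by (simp add: zw_def)

lemma dlt_zw1: "dlt (zw [m]) = ypre (xs (e (m - 1)))"
proof
  fix w show "dlt (zw [m]) w = ypre (xs (e (m - 1))) w"
    by (cases w) (auto simp: zw_def dlt_def ypre_def xs_def e_def split: letter.splits)
qed

lemma main_ser: "Phi (shuf A (cat B (dlt (zw ms)))) w = Phi (shuf (cat A (Tb ms)) B) w"
proof (induction ms arbitrary: A B w rule: rev_induct)
  case Nil
  show ?case by (simp add: zw_def)
next
  case (snoc m ms)
  have "cat B (dlt (zw (ms @ [m]))) = cat (cat B (dlt (zw ms))) (ypre (xs (e (m - 1))))"
    by (simp add: zw_snoc cat_dlt_dlt_fun[symmetric] dlt_zw1 cat_assoc_fun)
  then have "Phi (shuf A (cat B (dlt (zw (ms @ [m]))))) w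
      = Phi (shuf (cat A (sblk m)) (cat B (dlt (zw ms)))) w"
    by (simp add: lemB sblk_def)
  also have "\<dots> = Phi (shuf (cat (cat A (sblk m)) (Tb ms)) B) w"
    by (rule snoc.IH)
  also have "\<dots> = Phi (shuf (cat A (Tb (ms @ [m]))) B) w"
    by (simp add: Tb_snoc cat_assoc_fun)
  finally show ?case .
qed

lemma main_ser2: "Phi (shuf (dlt p) (dlt (zw ls))) w = Phi (cat (dlt p) (Tb ls)) w"
  using main_ser[of "dlt p" "dlt []" ls w] by simp



definition Sa :: "word \<Rightarrow> ser" where "Sa u = (\<lambda>w. (-1) ^ length u * dlt (rev u) w)"

lemma Sa_append: "Sa (p @ q) = cat (Sa q) (Sa p)"
  by (rule ext) (simp add: Sa_def cat_dlt_dlt_fun power_add mult_ac)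

lemma cat_dltY: "cat (dlt [Y]) Q = ypre Q"
proof
  fix w show "cat (dlt [Y]) Q w = ypre Q w"
    unfolding cat_dlt1 by (cases w) (auto simp: ypre_def split: letter.splits list.splits)
qed

lemma Sa_mid: "Sa (p @ Y # q) = (\<lambda>w. - cat (Sa q) (ypre (Sa p)) w)"
proof -
  have "Sa (p @ Y # q) = cat (Sa q) (cat (Sa [Y]) (Sa p))"
    using Sa_append[of p "[Y] @ q"] Sa_append[of "[Y]" q] by (simp add: cat_assoc_fun)
  moreover have "Sa [Y] = (\<lambda>w. - dlt [Y] w)" by (simp add: Sa_def)
  ultimately show ?thesis by (simp add: cat_dltY)
qed

lemma dlt_rep: "dlt (replicate j X) = xs (e j)"
  by (auto simp: dlt_def xs_def e_def)

lemma Sa_rep: "Sa (replicate j X) = (\<lambda>w. (-1) ^ j * xs (e j) w)"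
  by (simp add: Sa_def dlt_rep)

lemma rho_split: "shuf rho (cat P (ypre Q)) w = cat (shuf rho P) (ypre (shuf rho Q)) w"
proof (induction w arbitrary: P Q)
  case Nil then show ?case by simp
next
  case (Cons a w)
  show ?case
  proof (cases a)
    case X
    then show ?thesis by (simp add: shuf_Cons cat_Cons Cons.IH algebra_simps)
  next
    case Y
    then show ?thesis by (simp add: shuf_Cons cat_Cons Cons.IH algebra_simps)
  qed
qed

lemma rho_split_fun: "shuf rho (cat P (ypre Q)) = cat (shuf rho P) (ypre (shuf rho Q))"
  by (rule ext) (rule rho_split)

definition hb :: "nat \<Rightarrow> nat \<Rightarrow> rat fps" where
  "hb j n = (if j \<le> n then of_nat (n choose j) * fps_X ^ (n - j) else 0)"

lemma hb_Suc: "hb j (Suc n) = fps_X * hb j n + (if j = 0 then 0 else hb (j - 1) n)"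
proof (cases j)
  case 0 then show ?thesis by (simp add: hb_def)
next
  case (Suc i)
  show ?thesis
  proof (cases "Suc i \<le> n")
    case True
    then obtain d where d: "n = Suc i + d" by (metis le_add_diff_inverse)
    show ?thesis using Suc by (simp add: hb_def d algebra_simps)
  next
    case False
    then show ?thesis using Suc by (cases "i = n") (auto simp: hb_def)
  qed
qed

lemma sig_zero: "sig (\<lambda>k. 0) n = 0"
  by (induction n) simp_all

lemma sig_e: "sig (e j) n = - ((-1) ^ j * hb j n)"
proof (induction n arbitrary: j)
  case 0 then show ?case by (simp add: e_def hb_def)
next
  case (Suc n)
  show ?case
  proof (cases j)
    case 0
    have "(\<lambda>k. e 0 (Suc k)) = (\<lambda>k. 0)" by (simp add: e_def)
    then show ?thesis using 0 by (simp add: Suc.IH sig_zero hb_Suc)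
  next
    case (Suc i)
    have "(\<lambda>k. e j (Suc k)) = e i" using Suc by (auto simp: e_def)
    then show ?thesis using Suc by (simp add: Suc.IH hb_Suc algebra_simps)
  qed
qed

lemma rho_xs_e: "shuf rho (xs (e j)) w = xs (hb j) w"
proof (induction w arbitrary: j)
  case Nil then show ?case by (simp add: e_def hb_def)
next
  case (Cons a w)
  show ?case
  proof (cases a)
    case X
    show ?thesis
    proof (cases j)
      case 0
      have "(\<lambda>k. e 0 (Suc k)) = (\<lambda>k. 0)" by (simp add: e_def)
      then show ?thesis using X 0 by (simp add: shuf_Cons Cons.IH hb_Suc xs_lin)
    next
      case (Suc i)
      have "(\<lambda>k. e j (Suc k)) = e i" using Suc by (auto simp: e_def)
      then show ?thesis using X Suc by (simp add: shuf_Cons Cons.IH hb_Suc xs_lin)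
    qed
  next
    case Y then show ?thesis by (simp add: shuf_Cons)
  qed
qed

lemma X1: "xs (sig (e j)) = (\<lambda>w. - ((-1) ^ j * shuf rho (xs (e j)) w))"
  by (rule ext) (simp add: rho_xs_e xs_def sig_e)

function bl :: "word \<Rightarrow> nat list" where
  "bl [] = []"
| "bl (Y # w) = Suc (length (takeWhile (\<lambda>c. c = X) w)) # bl (dropWhile (\<lambda>c. c = X) w)"
| "bl (X # w) = bl w"
  by pat_completeness auto
termination by (relation "measure length") (auto simp: le_imp_less_Suc length_dropWhile_le)

lemma Tb_Nil: "Tb ks [] = (if ks = [] then 1 else 0)"
  by (induction ks) (simp_all add: dlt_def sblk_def)

lemma Tb_X: "Tb ks (X # w) = 0"
proof (induction ks arbitrary: w)
  case Nil then show ?case by (simp add: dlt_def)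
next
  case (Cons k ks)
  have "(\<lambda>v. Tb ks (X # v)) = (\<lambda>v. 0)" using Cons by auto
  then show ?case by (simp add: cat_Cons sblk_def)
qed

lemma Tb_X_fun: "(\<lambda>v. Tb ks (X # v)) = (\<lambda>v. 0)"
  by (simp add: Tb_X)

lemma Tb_Y: "Tb (k # ks) (Y # w) = cat (\<lambda>v. Tb ks (Y # v)) (sblk k) w + (if ks = [] then xs (sig (e (k - 1))) w else 0)"
  by (simp add: cat_Cons Tb_Nil sblk_def)


lemma takeWhile_X: "takeWhile (\<lambda>c. c = X) u = replicate (length (takeWhile (\<lambda>c. c = X) u)) X"
proof (induction u)
  case (Cons c u) then show ?case by (cases c) auto
qed simp

lemma dropWhile_X: "dropWhile (\<lambda>c. c = X) u = [] \<or> (\<exists>r. dropWhile (\<lambda>c. c = X) u = Y # r)"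
proof (induction u)
  case (Cons c u) then show ?case by (cases c) auto
qed simp

lemma K2: "(\<lambda>v. Tb (bl (Y # u)) (Y # v)) = (\<lambda>v. - shuf rho (Sa u) v)"
proof (induction "length u" arbitrary: u rule: less_induct)
  case less
  define j where "j = length (takeWhile (\<lambda>c. c = X) u)"
  define r where "r = dropWhile (\<lambda>c. c = X) u"
  have u: "u = replicate j X @ r"
    unfolding j_def r_def using takeWhile_X[of u] takeWhile_dropWhile_id[of "\<lambda>c. c = X" u] by simp
  have bl: "bl (Y # u) = Suc j # bl r" unfolding j_def r_def by simp
  consider "r = []" | r' where "r = Y # r'" using dropWhile_X[of u] unfolding r_def by blast
  then show ?case
  proof cases
    case 1
    have "(\<lambda>v. Tb [] (Y # v)) = (\<lambda>v. 0)" by (simp add: dlt_def)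
    then show ?thesis using 1 unfolding bl u by (simp add: Tb_Y X1 Sa_rep sblk_def)
  next
    case 2
    have "length r' < length u" using u 2 by simp
    then have IH: "(\<lambda>v. Tb (bl (Y # r')) (Y # v)) = (\<lambda>v. - shuf rho (Sa r') v)" using less by blast
    have ne: "bl r \<noteq> []" using 2 by simp
    have T1: "(\<lambda>v. Tb (bl r) (Y # v)) = (\<lambda>v. - shuf rho (Sa r') v)" using IH 2 by simp
    have "(\<lambda>v. Tb (bl (Y # u)) (Y # v)) = (\<lambda>v. cat (\<lambda>v. Tb (bl r) (Y # v)) (sblk (Suc j)) v)"
      unfolding bl using ne by (simp add: cat_Cons Tb_Nil del: bl.simps)
    also have "\<dots> = (\<lambda>v. - shuf rho (Sa u) v)"
      unfolding T1 unfolding u 2 by (simp add: X1 Sa_rep Sa_mid rho_split_fun sblk_def ypre_lin del: bl.simps)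
    finally show ?thesis .
  qed
qed



definition Kx :: "word \<Rightarrow> ser" where
  "Kx w = (\<lambda>v. \<Sum>i<length w. if w ! i = Y then shuf (dlt (take i w)) (Sa (drop (Suc i) w)) v else 0)"

lemma dlt_Cons_deriv: "(\<lambda>u. dlt (a # w) (b # u)) = (if a = b then dlt w else (\<lambda>u. 0))"
  by (auto simp: dlt_def)
lemma dlt_Nil_deriv: "(\<lambda>u. dlt [] (b # u)) = (\<lambda>u. 0)"
  by (auto simp: dlt_def)
lemma dlt_snoc_deriv: "(\<lambda>u. dlt (w @ [a]) (u @ [b])) = (if a = b then dlt w else (\<lambda>u. 0))"
  by (auto simp: dlt_def)
lemma dlt_Nil_sderiv: "(\<lambda>u. dlt [] (u @ [b])) = (\<lambda>u. 0)"
  by (auto simp: dlt_def)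
lemma Sa_snoc_deriv: "(\<lambda>u. Sa (q @ [c]) (b # u)) = (if c = b then (\<lambda>u. - Sa q u) else (\<lambda>u. 0))"
  by (auto simp: Sa_def dlt_def)
lemma Sa_Nil_deriv: "(\<lambda>u. Sa [] (b # u)) = (\<lambda>u. 0)"
  by (auto simp: Sa_def dlt_def)

lemma Kx_part1:
  "(\<Sum>i<length w. if w ! i = Y then shuf (\<lambda>u. dlt (take i w) (b # u)) (Sa (drop (Suc i) w)) v else 0)
   = (if w \<noteq> [] \<and> hd w = b then Kx (tl w) v else 0)"
proof (cases w)
  case Nil then show ?thesis by simp
next
  case (Cons a w')
  show ?thesis unfolding Cons
    by (simp add: sum.lessThan_Suc_shift dlt_Nil_deriv dlt_Cons_deriv Kx_def del: sum.lessThan_Suc cong: if_cong)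
qed

lemma Kx_part2:
  "(\<Sum>i<length w. if w ! i = Y then shuf (dlt (take i w)) (\<lambda>u. Sa (drop (Suc i) w) (b # u)) v else 0)
   = (if w \<noteq> [] \<and> last w = b then - Kx (butlast w) v else 0)"
proof (cases w rule: rev_cases)
  case Nil then show ?thesis by simp
next
  case (snoc w'' c)
  have "(\<Sum>i<length w''. if (w'' @ [c]) ! i = Y then shuf (dlt (take i (w'' @ [c]))) (\<lambda>u. Sa (drop (Suc i) (w'' @ [c])) (b # u)) v else 0)
     = (\<Sum>i<length w''. if c = b then - (if w'' ! i = Y then shuf (dlt (take i w'')) (Sa (drop (Suc i) w'')) v else 0) else 0)"
  proof (rule sum.cong)
    fix i assume "i \<in> {..<length w''}"
    then have i: "i < length w''" by simp
    then have d: "drop (Suc i) (w'' @ [c]) = drop (Suc i) w'' @ [c]" by simp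
    show "(if (w'' @ [c]) ! i = Y then shuf (dlt (take i (w'' @ [c]))) (\<lambda>u. Sa (drop (Suc i) (w'' @ [c])) (b # u)) v else 0)
      = (if c = b then - (if w'' ! i = Y then shuf (dlt (take i w'')) (Sa (drop (Suc i) w'')) v else 0) else 0)"
      unfolding d Sa_snoc_deriv using i by (simp add: nth_append)
  qed simp
  note H = this
  have last: "(if (w'' @ [c]) ! length w'' = Y then shuf (dlt (take (length w'') (w'' @ [c]))) (\<lambda>u. Sa (drop (Suc (length w'')) (w'' @ [c])) (b # u)) v else 0) = 0"
    by (simp add: Sa_Nil_deriv)
  show ?thesis unfolding snoc length_append_singleton sum.lessThan_Suc H last
    by (cases "c = b") (simp_all add: Kx_def sum_negf)
qed

lemma K1: "Ky (dlt w) v = Kx w v"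
proof (induction v arbitrary: w)
  case Nil
  show ?case
  proof (cases w)
    case Nil then show ?thesis by (simp add: Kx_def dlt_def)
  next
    case (Cons a w')
    show ?thesis unfolding Cons
      by (simp add: Kx_def sum.lessThan_Suc_shift dlt_def Sa_def del: sum.lessThan_Suc cong: if_cong)
  qed
next
  case (Cons b v)
  have A: "Ky (\<lambda>u. dlt w (b # u)) v = (if w \<noteq> [] \<and> hd w = b then Kx (tl w) v else 0)"
    by (cases w) (simp_all add: dlt_Cons_deriv dlt_Nil_deriv Cons.IH)
  have B: "Ky (\<lambda>u. dlt w (u @ [b])) v = (if w \<noteq> [] \<and> last w = b then Kx (butlast w) v else 0)"
    by (cases w rule: rev_cases) (simp_all add: dlt_snoc_deriv dlt_Nil_sderiv Cons.IH)
  have C: "Kx w (b # v) = (\<Sum>i<length w. if w ! i = Y then shuf (\<lambda>u. dlt (take i w) (b # u)) (Sa (drop (Suc i) w)) v else 0)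
     + (\<Sum>i<length w. if w ! i = Y then shuf (dlt (take i w)) (\<lambda>u. Sa (drop (Suc i) w) (b # u)) v else 0)"
    unfolding Kx_def by (simp add: shuf_Cons sum.distrib[symmetric] if_distrib cong: if_cong)
  show ?case unfolding C Kx_part1 Kx_part2 by (simp add: A B)
qed

lemma K1_fun: "Ky (dlt w) = Kx w"
  by (rule ext) (rule K1)

lemma shuf_sum2: "finite I \<Longrightarrow> shuf F (\<lambda>v. \<Sum>i\<in>I. G i v) w = (\<Sum>i\<in>I. shuf F (G i) w)"
  by (induction I rule: finite_induct) simp_all

lemma shuf_if2: "shuf F (\<lambda>v. if c then G v else 0) w = (if c then shuf F G w else 0)"
  by (cases c) simp_all

lemma shuf_lcomm: "shuf F (shuf G H) w = shuf G (shuf F H) w"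
  by (metis shuf_assoc shuf_comm_fun)

definition hy :: "word \<Rightarrow> bool" where "hy u = (u = [] \<or> hd u = Y)"

definition Pe :: "word \<Rightarrow> ser" where
  "Pe w = (\<lambda>v. \<Sum>i\<le>length w. if hy (drop i w) then shuf (dlt (take i w)) (Tb (bl (drop i w))) v else 0)"

lemma Pe_part1:
  "(\<Sum>i\<le>length w. if hy (drop i w) then shuf (\<lambda>u. dlt (take i w) (b # u)) (Tb (bl (drop i w))) v else 0)
   = (if w \<noteq> [] \<and> hd w = b then Pe (tl w) v else 0)"
proof (cases w)
  case Nil then show ?thesis by (simp add: dlt_Nil_deriv cong: if_cong)
next
  case (Cons a w')
  show ?thesis unfolding Cons
    by (simp add: sum.atMost_Suc_shift dlt_Nil_deriv dlt_Cons_deriv Pe_def del: sum.atMost_Suc cong: if_cong)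
qed

lemma Pe_part2:
  "(\<Sum>i\<le>length w. if hy (drop i w) then shuf (dlt (take i w)) (\<lambda>u. Tb (bl (drop i w)) (b # u)) v else 0)
   = (if b = Y then - shuf rho (Kx w) v else 0)"
proof (cases b)
  case X then show ?thesis by (simp add: Tb_X_fun cong: if_cong)
next
  case Y
  have "(\<Sum>i\<le>length w. if hy (drop i w) then shuf (dlt (take i w)) (\<lambda>u. Tb (bl (drop i w)) (Y # u)) v else 0)
     = (\<Sum>i<length w. if hy (drop i w) then shuf (dlt (take i w)) (\<lambda>u. Tb (bl (drop i w)) (Y # u)) v else 0)"
    unfolding lessThan_Suc_atMost[symmetric] sum.lessThan_Suc by (simp add: dlt_def)
  also have "\<dots> = (\<Sum>i<length w. - (if w ! i = Y then shuf rho (shuf (dlt (take i w)) (Sa (drop (Suc i) w))) v else 0))"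
  proof (rule sum.cong)
    fix i assume "i \<in> {..<length w}"
    then have d: "drop i w = w ! i # drop (Suc i) w" by (simp add: Cons_nth_drop_Suc)
    show "(if hy (drop i w) then shuf (dlt (take i w)) (\<lambda>u. Tb (bl (drop i w)) (Y # u)) v else 0) =
          - (if w ! i = Y then shuf rho (shuf (dlt (take i w)) (Sa (drop (Suc i) w))) v else 0)"
    proof (cases "w ! i")
      case X then show ?thesis unfolding d by (simp add: hy_def)
    next
      case Y then show ?thesis unfolding d by (simp add: hy_def K2 shuf_lcomm del: bl.simps)
    qed
  qed simp
  also have "\<dots> = - shuf rho (Kx w) v"
    by (simp add: Kx_def shuf_sum2 shuf_if2 sum_negf)
  finally show ?thesis using Y by (simp cong: if_cong)
qed

lemma PhiE: "Phi (dlt w) v = Pe w v"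
proof (induction v arbitrary: w)
  case Nil
  show ?case
  proof (cases w)
    case Nil then show ?thesis by (simp add: Pe_def hy_def dlt_def)
  next
    case (Cons a w')
    show ?thesis unfolding Cons
      by (cases a) (simp_all add: Pe_def hy_def sum.atMost_Suc_shift dlt_def Tb_Nil sblk_def del: sum.atMost_Suc cong: if_cong)
  qed
next
  case (Cons b v)
  have A: "Phi (\<lambda>u. dlt w (b # u)) v = (if w \<noteq> [] \<and> hd w = b then Pe (tl w) v else 0)"
    by (cases w) (simp_all add: dlt_Cons_deriv dlt_Nil_deriv Cons.IH)
  have C: "Pe w (b # v) = (\<Sum>i\<le>length w. if hy (drop i w) then shuf (\<lambda>u. dlt (take i w) (b # u)) (Tb (bl (drop i w))) v else 0)
     + (\<Sum>i\<le>length w. if hy (drop i w) then shuf (dlt (take i w)) (\<lambda>u. Tb (bl (drop i w)) (b # u)) v else 0)"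
    unfolding Pe_def by (simp add: shuf_Cons sum.distrib[symmetric] if_distrib cong: if_cong)
  show ?case unfolding C Pe_part1 Pe_part2 by (simp add: A K1_fun)
qed



lemma UNIV_letter: "(UNIV :: letter set) = {X, Y}"
proof -
  have "x = X \<or> x = Y" for x by (cases x) auto
  then show ?thesis by auto
qed

lemma finite_W: "finite {u :: word. length u \<le> n}"
proof -
  have "finite {xs. set xs \<subseteq> (UNIV::letter set) \<and> length xs \<le> n}"
    by (rule finite_lists_length_le) (simp add: UNIV_letter)
  then show ?thesis by simp
qed

lemma shuf_local:
  "(\<And>u. length u \<le> length w \<Longrightarrow> F u = F' u) \<Longrightarrow> (\<And>u. length u \<le> length w \<Longrightarrow> G u = G' u)
   \<Longrightarrow> shuf F G w = shuf F' G' w"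
proof (induction w arbitrary: F G F' G')
  case Nil then show ?case by simp
next
  case (Cons a w)
  have 1: "shuf (\<lambda>v. F (a # v)) G w = shuf (\<lambda>v. F' (a # v)) G' w"
    by (rule Cons.IH) (auto intro: Cons.prems)
  have 2: "shuf F (\<lambda>v. G (a # v)) w = shuf F' (\<lambda>v. G' (a # v)) w"
    by (rule Cons.IH) (auto intro: Cons.prems)
  show ?case by (simp add: shuf_Cons 1 2)
qed

lemma Ky_local: "(\<And>u. length u \<le> Suc (length w) \<Longrightarrow> F u = F' u) \<Longrightarrow> Ky F w = Ky F' w"
proof (induction w arbitrary: F F')
  case Nil then show ?case by simp
next
  case (Cons a w)
  have 1: "Ky (\<lambda>v. F (a # v)) w = Ky (\<lambda>v. F' (a # v)) w"
    by (rule Cons.IH) (auto intro: Cons.prems)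
  have 2: "Ky (\<lambda>v. F (v @ [a])) w = Ky (\<lambda>v. F' (v @ [a])) w"
    by (rule Cons.IH) (auto intro: Cons.prems)
  show ?case by (simp add: 1 2)
qed

lemma Phi_local: "(\<And>u. length u \<le> length w \<Longrightarrow> F u = F' u) \<Longrightarrow> Phi F w = Phi F' w"
proof (induction w arbitrary: F F')
  case Nil then show ?case by simp
next
  case (Cons a w)
  have 1: "Phi (\<lambda>v. F (a # v)) w = Phi (\<lambda>v. F' (a # v)) w"
    by (rule Cons.IH) (auto intro: Cons.prems)
  have 2: "shuf rho (Ky F) w = shuf rho (Ky F') w"
    by (rule shuf_local) (auto intro!: Ky_local Cons.prems)
  show ?case by (simp add: 1 2)
qed

lemma Phi_sum: "finite I \<Longrightarrow> Phi (\<lambda>v. \<Sum>i\<in>I. G i v) w = (\<Sum>i\<in>I. Phi (G i) w)"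
  by (induction I rule: finite_induct) simp_all

lemma sum_dlt_collapse:
  assumes "finite W" "v \<in> W"
  shows "(\<Sum>u\<in>W. F u * dlt u v) = F v"
proof -
  have "(\<Sum>u\<in>W. F u * dlt u v) = (\<Sum>u\<in>W. if v = u then F u else 0)"
    by (rule sum.cong) (auto simp: dlt_def)
  also have "\<dots> = F v" using assms by (simp add: sum.delta sum.delta')
  finally show ?thesis .
qed

lemma Phi_expand: "Phi F w = (\<Sum>u\<in>{u. length u \<le> length w}. F u * Phi (dlt u) w)"
proof -
  let ?W = "{u :: word. length u \<le> length w}"
  have "Phi F w = Phi (\<lambda>v. \<Sum>u\<in>?W. F u * dlt u v) w"
    by (rule Phi_local) (simp add: sum_dlt_collapse finite_W)
  also have "\<dots> = (\<Sum>u\<in>?W. F u * Phi (dlt u) w)"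
    by (simp add: Phi_sum finite_W)
  finally show ?thesis .
qed

lemma shuf_expand2: "shuf F G w = (\<Sum>v\<in>{v. length v \<le> length w}. G v * shuf F (dlt v) w)"
proof -
  let ?W = "{u :: word. length u \<le> length w}"
  have "shuf F G w = shuf F (\<lambda>x. \<Sum>v\<in>?W. G v * dlt v x) w"
    by (rule shuf_local) (simp_all add: sum_dlt_collapse finite_W)
  also have "\<dots> = (\<Sum>v\<in>?W. G v * shuf F (dlt v) w)"
    by (simp add: shuf_sum2 finite_W)
  finally show ?thesis .
qed

lemma Phi_dlt_long: "length w < length u \<Longrightarrow> Phi (dlt u) w = 0"
proof -
  assume "length w < length u"
  then have "Phi (dlt u) w = Phi (\<lambda>v. 0) w"
    by (intro Phi_local) (auto simp: dlt_def)
  then show ?thesis by simp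
qed

lemma count_list_map_rev: "count_list (map rev ys) w = count_list ys (rev w)"
  by (induction ys) auto

lemma shw_rev_length: "x \<in> set (shw_rev U V) \<Longrightarrow> length x = length U + length V"
  by (induction U V arbitrary: x rule: shw_rev.induct) auto

lemma count_list_map_Cons: "count_list (map ((#) b) ys) (a # w) = (if b = a then count_list ys w else 0)"
  by (induction ys) auto

lemma crec: "count_list (shw_rev U V) (a # W) =
   (case U of [] \<Rightarrow> 0 | b # U' \<Rightarrow> if b = a then count_list (shw_rev U' V) W else 0)
 + (case V of [] \<Rightarrow> 0 | c # V' \<Rightarrow> if c = a then count_list (shw_rev U V') W else 0)"
proof (cases U)
  case Nil
  then show ?thesis by (cases V) auto
next
  case (Cons b U')
  show ?thesis
  proof (cases V)
    case Nil then show ?thesis using Cons by (cases U') auto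
  next
    case (Cons c V')
    then show ?thesis using \<open>U = b # U'\<close> by (simp add: count_list_map_Cons)
  qed
qed

lemma crec_Nil: "count_list (shw_rev U V) [] = (if U = [] \<and> V = [] then 1 else 0)"
proof (cases "U = [] \<and> V = []")
  case True then show ?thesis by simp
next
  case False
  have "[] \<notin> set (shw_rev U V)" using shw_rev_length False by fastforce
  then show ?thesis using False by (simp add: count_list_0_iff)
qed

lemma shuf_dlt_cnt: "shuf (dlt u) (dlt v) w = of_nat (count_list (shw u v) w)"
proof (induction w arbitrary: u v rule: rev_induct)
  case Nil
  show ?case by (simp add: shw_def count_list_map_rev crec_Nil dlt_def)
next
  case (snoc a w)
  have 1: "shuf (\<lambda>x. dlt u (x @ [a])) (dlt v) w = (case rev u of [] \<Rightarrow> 0 | b # U' \<Rightarrow> if b = a then of_nat (count_list (shw (rev U') v) w) else 0)"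
    by (cases u rule: rev_cases) (simp_all add: dlt_snoc_deriv dlt_Nil_sderiv snoc.IH)
  have 2: "shuf (dlt u) (\<lambda>x. dlt v (x @ [a])) w = (case rev v of [] \<Rightarrow> 0 | b # V' \<Rightarrow> if b = a then of_nat (count_list (shw u (rev V')) w) else 0)"
    by (cases v rule: rev_cases) (simp_all add: dlt_snoc_deriv dlt_Nil_sderiv snoc.IH)
  show ?case
    unfolding shuf_snoc 1 2
    by (simp add: shw_def count_list_map_rev crec split: list.splits)
qed



definition pos :: "nat list \<Rightarrow> bool" where "pos qs = (\<forall>k\<in>set qs. 0 < k)"

lemma zw_Nil[simp]: "zw [] = []" by (simp add: zw_def)
lemma zw_Cons: "zw (q # qs) = Y # replicate (q - 1) X @ zw qs" by (simp add: zw_def)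
lemma zw_append: "zw (qs @ rs) = zw qs @ zw rs" by (simp add: zw_def)

lemma hy_zw: "hy (zw qs)"
  by (cases qs) (auto simp: hy_def zw_Cons)

lemma takeWhile_rep_hy: "hy r \<Longrightarrow> takeWhile (\<lambda>c. c = X) (replicate m X @ r) = replicate m X"
  by (induction m) (cases r; auto simp: hy_def)+
lemma dropWhile_rep_hy: "hy r \<Longrightarrow> dropWhile (\<lambda>c. c = X) (replicate m X @ r) = r"
  by (induction m) (cases r; auto simp: hy_def)+

lemma bl_zw: "pos qs \<Longrightarrow> bl (zw qs) = qs"
proof (induction qs)
  case Nil then show ?case by simp
next
  case (Cons q qs)
  then have q: "0 < q" and p: "pos qs" by (auto simp: pos_def)
  show ?case unfolding zw_Cons
    using q Cons.IH[OF p] by (simp add: takeWhile_rep_hy dropWhile_rep_hy hy_zw del: bl.simps) (simp add: takeWhile_rep_hy dropWhile_rep_hy hy_zw)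
qed

lemma zw_inj: "pos qs \<Longrightarrow> pos qs' \<Longrightarrow> zw qs = zw qs' \<Longrightarrow> qs = qs'"
  by (metis bl_zw)

lemma idx_zw: "pos qs \<Longrightarrow> idx (zw qs) = qs"
  unfolding idx_def
proof (rule the_equality)
  assume "pos qs" then show "(\<forall>k\<in>set qs. 0 < k) \<and> zw qs = zw qs" by (simp add: pos_def)
next
  fix ks assume "pos qs" "(\<forall>k\<in>set ks. 0 < k) \<and> zw ks = zw qs"
  then show "ks = qs" using zw_inj[of ks qs] by (auto simp: pos_def)
qed

lemma zw_bl: "hy u \<Longrightarrow> zw (bl u) = u \<and> pos (bl u)"
proof (induction "length u" arbitrary: u rule: less_induct)
  case less
  show ?case
  proof (cases u)
    case Nil then show ?thesis by (simp add: pos_def)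
  next
    case (Cons c u')
    then have c: "c = Y" using less.prems by (simp add: hy_def)
    define j where "j = length (takeWhile (\<lambda>c. c = X) u')"
    define r where "r = dropWhile (\<lambda>c. c = X) u'"
    have u': "u' = replicate j X @ r"
      unfolding j_def r_def using takeWhile_X[of u'] takeWhile_dropWhile_id[of "\<lambda>c. c = X" u'] by simp
    have hr: "hy r" using dropWhile_X[of u'] unfolding r_def hy_def by auto
    have "length r < length u" using Cons u' by simp
    then have IH: "zw (bl r) = r \<and> pos (bl r)" using less hr by blast
    have bl: "bl u = Suc j # bl r" unfolding Cons c j_def r_def by simp
    show ?thesis unfolding bl using IH by (simp add: zw_Cons pos_def Cons c u')
  qed
qed

lemma shw_hy: "hy p \<Longrightarrow> hy q \<Longrightarrow> count_list (shw p q) u \<noteq> 0 \<Longrightarrow> hy u"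
proof -
  assume hp: "hy p" and hq: "hy q" and c: "count_list (shw p q) u \<noteq> 0"
  show "hy u"
  proof (rule ccontr)
    assume "\<not> hy u"
    then obtain w where u: "u = X # w" by (cases u) (auto simp: hy_def, metis letter.exhaust)
    have "(\<lambda>v. dlt p (X # v)) = (\<lambda>v. 0)"
    proof
      fix v show "dlt p (X # v) = 0" using hp by (cases p) (auto simp: dlt_def hy_def)
    qed
    moreover have "(\<lambda>v. dlt q (X # v)) = (\<lambda>v. 0)"
    proof
      fix v show "dlt q (X # v) = 0" using hq by (cases q) (auto simp: dlt_def hy_def)
    qed
    ultimately have "shuf (dlt p) (dlt q) (X # w) = 0" by (simp add: shuf_Cons)
    then show False using c u by (simp add: shuf_dlt_cnt)
  qed
qed

lemma sum_atMost_add_split: "(\<Sum>i\<le>m + (k::nat). g i) = (\<Sum>i<m. g i) + (\<Sum>i\<le>k. g (m + i))"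
proof (induction k)
  case 0 then show ?case by (simp add: lessThan_Suc_atMost[symmetric])
next
  case (Suc k) then show ?case by (simp add: add.assoc)
qed

lemma cut_reindex:
  "pos qs \<Longrightarrow> (\<Sum>i\<le>length (zw qs). if hy (drop i (zw qs)) then h (take i (zw qs)) (drop i (zw qs)) else 0)
     = (\<Sum>j\<le>length qs. h (zw (take j qs)) (zw (drop j qs)))"
proof (induction qs arbitrary: h)
  case Nil then show ?case by (simp add: hy_def)
next
  case (Cons q qs')
  then obtain m where q: "q = Suc m" and p: "pos qs'" by (auto simp: pos_def dest: gr0_implies_Suc)
  let ?Z = "zw qs'"
  have zq: "zw (q # qs') = Y # replicate m X @ ?Z" by (simp add: zw_Cons q)
  let ?f = "\<lambda>i. if hy (drop i (zw (q # qs'))) then h (take i (zw (q # qs'))) (drop i (zw (q # qs'))) else 0"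
  have "(\<Sum>i\<le>length (zw (q # qs')). ?f i) = ?f 0 + (\<Sum>i\<le>m + length ?Z. ?f (Suc i))"
    unfolding zq by (simp add: sum.atMost_Suc_shift del: sum.atMost_Suc)
  also have "(\<Sum>i\<le>m + length ?Z. ?f (Suc i)) = (\<Sum>i<m. ?f (Suc i)) + (\<Sum>i\<le>length ?Z. ?f (Suc (m + i)))"
    by (rule sum_atMost_add_split)
  also have "(\<Sum>i<m. ?f (Suc i)) = 0"
  proof (rule sum.neutral, intro ballI)
    fix i assume "i \<in> {..<m}"
    then have "drop (Suc i) (zw (q # qs')) = X # replicate (m - Suc i) X @ ?Z"
      unfolding zq by (simp add: Suc_diff_Suc[symmetric])
    then show "?f (Suc i) = 0" by (simp add: hy_def)
  qed
  also have "(\<Sum>i\<le>length ?Z. ?f (Suc (m + i))) =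
      (\<Sum>i\<le>length ?Z. if hy (drop i ?Z) then h (Y # replicate m X @ take i ?Z) (drop i ?Z) else 0)"
    unfolding zq by (simp cong: if_cong)
  also have "\<dots> = (\<Sum>j\<le>length qs'. h (Y # replicate m X @ zw (take j qs')) (zw (drop j qs')))"
    using Cons.IH[OF p, of "\<lambda>a b. h (Y # replicate m X @ a) b"] by simp
  finally show ?case
    by (simp add: sum.atMost_Suc_shift hy_zw zq zw_Cons q hy_def del: sum.atMost_Suc)
qed

lemma PhiZ: "pos qs \<Longrightarrow> Phi (dlt (zw qs)) v = (\<Sum>j\<le>length qs. shuf (dlt (zw (take j qs))) (Tb (drop j qs)) v)"
proof -
  assume p: "pos qs"
  have pd: "pos (drop j qs)" for j using p by (auto simp: pos_def dest: in_set_dropD)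
  show ?thesis
    unfolding PhiE Pe_def cut_reindex[OF p, of "\<lambda>a b. shuf (dlt a) (Tb (bl b)) v"]
    by (simp add: bl_zw pd)
qed



lemma neg1_fps: "(-1 :: rat fps) ^ j = fps_const ((-1) ^ j)"
proof -
  have "(-1 :: rat fps) = fps_const (-1)" by (simp only: fps_const_neg[symmetric] fps_const_1_eq_1)
  then show ?thesis by simp
qed

lemma neg1_mult_nth: "fps_nth ((-1 :: rat fps) ^ j * f) l = (-1) ^ j * fps_nth f l"
  by (simp add: neg1_fps)

lemma hb_nth: "fps_nth (hb j m) l = (if j \<le> m \<and> l = m - j then of_nat (m choose j) else 0)"
  by (simp add: hb_def)

lemma sblk_nth: "0 < k \<Longrightarrow> fps_nth (sblk k u) l = (if u = zw [k + l] then (-1) ^ k * of_nat (k + l - 1 choose l) else 0)"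
proof -
  assume k: "0 < k"
  then obtain j where kj: "k = Suc j" by (metis gr0_implies_Suc)
  show ?thesis
  proof (cases "\<exists>m. u = Y # replicate m X")
    case True
    then obtain m where u: "u = Y # replicate m X" by blast
    have eq: "(u = zw [k + l]) = (j \<le> m \<and> l = m - j)"
      unfolding u kj by (auto simp: zw_def)
    have "fps_nth (sblk k u) l = - ((-1) ^ j * fps_nth (hb j m) l)"
      unfolding u kj sblk_def by (simp add: xs_def sig_e neg1_mult_nth)
    also have "\<dots> = (if u = zw [k + l] then (-1) ^ k * of_nat (k + l - 1 choose l) else 0)"
    proof (cases "j \<le> m \<and> l = m - j")
      case True
      then have m: "m = j + l" by auto
      have "(k + l - 1) choose l = m choose j"
        using binomial_symmetric[of l m] unfolding m kj by simp
      then show ?thesis using True eq kj by (simp add: hb_nth)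
    next
      case False then show ?thesis using eq by (auto simp: hb_nth)
    qed
    finally show ?thesis .
  next
    case False
    then have "sblk k u = 0"
      unfolding sblk_def ypre_def xs_def by (auto split: list.splits letter.splits)
    moreover have "u \<noteq> zw [k + l]" using False by (auto simp: zw_def)
    ultimately show ?thesis by simp
  qed
qed

lemma finite_tuples: "finite (tuples r n)"
proof -
  have "tuples r n \<subseteq> {ls. set ls \<subseteq> {..n} \<and> length ls = r}"
    by (auto simp: tuples_def dest: member_le_sum_list)
  moreover have "finite {ls. set ls \<subseteq> {..n::nat} \<and> length ls = r}"
    by (rule finite_lists_length_eq) simp
  ultimately show ?thesis by (rule finite_subset)
qed

lemma tuples_0: "tuples 0 n = (if n = 0 then {[]} else {})"
  by (auto simp: tuples_def)

lemma sum_tuples_Suc: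
  "(\<Sum>ls\<in>tuples (Suc r) n. f ls) = (\<Sum>l0\<le>n. \<Sum>ls\<in>tuples r (n - l0). f (l0 # ls))"
proof -
  have "(\<Sum>ls\<in>tuples (Suc r) n. f ls) = (\<Sum>p\<in>(SIGMA l0:{..n}. tuples r (n - l0)). f (fst p # snd p))"
    by (rule sum.reindex_bij_witness[where i="\<lambda>p. fst p # snd p" and j="\<lambda>ls. (hd ls, tl ls)"])
       (auto simp: tuples_def length_Suc_conv)
  also have "\<dots> = (\<Sum>l0\<le>n. \<Sum>ls\<in>tuples r (n - l0). f (l0 # ls))"
    by (subst sum.Sigma) (auto simp: finite_tuples case_prod_beta)
  finally show ?thesis .
qed

lemma sum_atMost_rev: "(\<Sum>l\<le>(n::nat). g l) = (\<Sum>a\<le>n. g (n - a))"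
  by (rule sum.reindex_bij_witness[of _ "\<lambda>a. n - a" "\<lambda>a. n - a"]) auto

lemma split_count:
  "(\<Sum>i\<le>length v. if take i v = A \<and> drop i v = B then (c::'a::comm_monoid_add) else 0) = (if v = A @ B then c else 0)"
proof -
  have "(\<Sum>i\<le>length v. if take i v = A \<and> drop i v = B then c else 0)
     = (\<Sum>i\<le>length v. if i = length A then (if v = A @ B then c else 0) else 0)"
  proof (rule sum.cong)
    fix i assume "i \<in> {..length v}"
    then have i: "i \<le> length v" by simp
    have "(take i v = A \<and> drop i v = B) = (i = length A \<and> v = A @ B)"
    proof
      assume "take i v = A \<and> drop i v = B"
      then show "i = length A \<and> v = A @ B" using i by (metis append_take_drop_id length_take min.absorb2)
    next
      assume "i = length A \<and> v = A @ B"
      then show "take i v = A \<and> drop i v = B" by simp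
    qed
    then show "(if take i v = A \<and> drop i v = B then c else 0) = (if i = length A then (if v = A @ B then c else 0) else 0)"
      by auto
  qed simp
  also have "\<dots> = (if v = A @ B then c else 0)"
    by (simp add: sum.delta')
  finally show ?thesis .
qed

lemma ladd_Cons: "ladd (k # ds) (l # ls) = (k + l) # ladd ds ls" by (simp add: ladd_def)
lemma bb_Cons: "bb (k # ds) (l # ls) = ((k + l - 1) choose l) * bb ds ls" by (simp add: bb_def)
lemma wt_Cons: "wt (k # ds) = k + wt ds" by (simp add: wt_def)

lemma Tb_nth: "pos ds \<Longrightarrow> fps_nth (Tb ds v) n =
   (-1) ^ wt ds * (\<Sum>ls\<in>tuples (length ds) n. of_nat (bb ds ls) * mon (zw (rev (ladd ds ls))) v)"
proof (induction ds arbitrary: v n)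
  case Nil
  show ?case by (simp add: dlt_def tuples_0 wt_def bb_def ladd_def mon_def)
next
  case (Cons k ds)
  then have k: "0 < k" and p: "pos ds" by (auto simp: pos_def)
  define A where "A ls = zw (rev (ladd ds ls))" for ls
  define c where "c a ls = (-1) ^ (k + wt ds) * of_nat (bb ds ls) * (of_nat (k + (n - a) - 1 choose (n - a)) :: rat)" for a ls
  let ?r = "length ds"
  have "fps_nth (Tb (k # ds) v) n = (\<Sum>i\<le>length v. \<Sum>a\<le>n. fps_nth (Tb ds (take i v)) a * fps_nth (sblk k (drop i v)) (n - a))"
    by (simp add: cat_explicit fps_sum_nth fps_mult_nth atLeast0AtMost)
  also have "\<dots> = (\<Sum>i\<le>length v. \<Sum>a\<le>n. \<Sum>ls\<in>tuples ?r a. (if take i v = A ls \<and> drop i v = zw [k + (n - a)] then c a ls else 0))"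
  proof (intro sum.cong refl)
    fix i a
    show "fps_nth (Tb ds (take i v)) a * fps_nth (sblk k (drop i v)) (n - a) =
      (\<Sum>ls\<in>tuples ?r a. (if take i v = A ls \<and> drop i v = zw [k + (n - a)] then c a ls else 0))"
    proof (cases "drop i v = zw [k + (n - a)]")
      case True
      have "fps_nth (Tb ds (take i v)) a * fps_nth (sblk k (drop i v)) (n - a)
        = (\<Sum>ls\<in>tuples ?r a. (-1) ^ wt ds * (of_nat (bb ds ls) * mon (A ls) (take i v)) * ((-1) ^ k * of_nat (k + (n - a) - 1 choose (n - a))))"
        unfolding Cons.IH[OF p] sblk_nth[OF k] A_def using True by (simp add: sum_distrib_left sum_distrib_right)
      also have "\<dots> = (\<Sum>ls\<in>tuples ?r a. (if take i v = A ls \<and> drop i v = zw [k + (n - a)] then c a ls else 0))"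
        by (rule sum.cong) (auto simp: mon_def c_def True power_add)
      finally show ?thesis .
    next
      case False
      then show ?thesis by (simp add: sblk_nth[OF k])
    qed
  qed
  also have "\<dots> = (\<Sum>a\<le>n. \<Sum>ls\<in>tuples ?r a. \<Sum>i\<le>length v. (if take i v = A ls \<and> drop i v = zw [k + (n - a)] then c a ls else 0))"
    by (subst sum.swap) (simp add: sum.swap[of _ "{..length v}"])
  also have "\<dots> = (\<Sum>a\<le>n. \<Sum>ls\<in>tuples ?r a. (if v = A ls @ zw [k + (n - a)] then c a ls else 0))"
    by (simp add: split_count)
  also have "\<dots> = (-1) ^ wt (k # ds) * (\<Sum>ls\<in>tuples (length (k # ds)) n. of_nat (bb (k # ds) ls) * mon (zw (rev (ladd (k # ds) ls))) v)"
  proof -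
    have "(-1) ^ wt (k # ds) * (\<Sum>ls\<in>tuples (length (k # ds)) n. of_nat (bb (k # ds) ls) * mon (zw (rev (ladd (k # ds) ls))) v)
      = (\<Sum>l0\<le>n. \<Sum>ls\<in>tuples ?r (n - l0). (-1) ^ wt (k # ds) * (of_nat (bb (k # ds) (l0 # ls)) * mon (zw (rev (ladd (k # ds) (l0 # ls)))) v))"
      by (simp add: sum_tuples_Suc sum_distrib_left)
    also have "\<dots> = (\<Sum>a\<le>n. \<Sum>ls\<in>tuples ?r (n - (n - a)). (-1) ^ wt (k # ds) * (of_nat (bb (k # ds) ((n - a) # ls)) * mon (zw (rev (ladd (k # ds) ((n - a) # ls)))) v))"
      by (rule sum_atMost_rev)
    also have "\<dots> = (\<Sum>a\<le>n. \<Sum>ls\<in>tuples ?r a. (if v = A ls @ zw [k + (n - a)] then c a ls else 0))"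
    proof (rule sum.cong[OF refl])
      fix a assume "a \<in> {..n}"
      then have a: "n - (n - a) = a" by simp
      show "(\<Sum>ls\<in>tuples ?r (n - (n - a)). (-1) ^ wt (k # ds) * (of_nat (bb (k # ds) ((n - a) # ls)) * mon (zw (rev (ladd (k # ds) ((n - a) # ls)))) v))
        = (\<Sum>ls\<in>tuples ?r a. (if v = A ls @ zw [k + (n - a)] then c a ls else 0))"
        unfolding a by (rule sum.cong) (auto simp: ladd_Cons bb_Cons wt_Cons zw_append mon_def A_def c_def)
    qed
    finally show ?thesis by simp
  qed
  finally show ?case .
qed



lemma supp_mon: "supp (mon p) = {p}" by (auto simp: supp_def mon_def)
lemma supp_zero: "supp (\<lambda>_. 0) = {}" by (auto simp: supp_def)

lemma sum_atMost_only0: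
  assumes "\<And>m. 0 < m \<Longrightarrow> g m = 0"
  shows "(\<Sum>m\<le>(n::nat). g m) = g 0"
proof -
  have "(\<Sum>m\<le>n. g m) = (\<Sum>m\<le>n. if m = 0 then g 0 else 0)"
    by (rule sum.cong) (auto simp: assms)
  then show ?thesis by (simp add: sum.delta)
qed

lemma phihat_const: "phihat (const_ser P) n w = (\<Sum>u\<in>supp P. P u * phihat_idx (idx u) n w)"
  unfolding phihat_def by (subst sum_atMost_only0) (auto simp: const_ser_def supp_zero)

lemma shS_const: "shS (const_ser M) G n w = sh M (G n) w"
  unfolding shS_def
  by (subst sum_atMost_only0) (auto simp: const_ser_def sh_def supp_zero)

lemma sh_mon: "sh (mon p) Q w = (\<Sum>v\<in>supp Q. Q v * of_nat (count_list (shw p v) w))"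
  unfolding sh_def supp_mon by (simp add: mon_def)

lemma tsum_const: "tsum_tuples r (\<lambda>ls. const_ser (f ls)) n v = (\<Sum>ls\<in>tuples r n. f ls v)"
proof -
  have "tsum_tuples r (\<lambda>ls. const_ser (f ls)) n v = (\<Sum>m\<le>n. if m = n then (\<Sum>ls\<in>tuples r n. f ls v) else 0)"
    unfolding tsum_tuples_def by (rule sum.cong) (auto simp: const_ser_def)
  then show ?thesis by (simp add: sum.delta')
qed

lemma cnt_len: "count_list (shw p v) w \<noteq> 0 \<Longrightarrow> length w = length p + length v"
proof -
  assume "count_list (shw p v) w \<noteq> 0"
  then have "w \<in> set (shw p v)" by (metis count_notin)
  then obtain x where "x \<in> set (shw_rev (rev p) (rev v))" "w = rev x" by (auto simp: shw_def)
  then show ?thesis using shw_rev_length by fastforce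
qed

lemma sum_reconcile:
  assumes "finite S" "finite W" "\<And>v. v \<in> S \<Longrightarrow> v \<notin> W \<Longrightarrow> f v = 0" "\<And>v. v \<in> W \<Longrightarrow> v \<notin> S \<Longrightarrow> f v = 0"
  shows "sum f S = sum f W"
proof -
  have "sum f S = sum f (S \<union> W)" by (rule sum.mono_neutral_left) (use assms in auto)
  also have "\<dots> = sum f W" by (rule sum.mono_neutral_right) (use assms in auto)
  finally show ?thesis .
qed

lemma pos_drop: "pos qs \<Longrightarrow> pos (drop j qs)" by (auto simp: pos_def dest: in_set_dropD)

lemma TT_term: "pos ds \<Longrightarrow>
  (-1) ^ wt ds * shS (const_ser (mon p)) (tsum_tuples (length ds) (\<lambda>ls. const_ser (\<lambda>v. of_nat (bb ds ls) * mon (zw (rev (ladd ds ls))) v))) n w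
  = fps_nth (shuf (dlt p) (Tb ds) w) n"
proof -
  assume p: "pos ds"
  define Q where "Q v = (\<Sum>ls\<in>tuples (length ds) n. of_nat (bb ds ls) * mon (zw (rev (ladd ds ls))) v)" for v
  have Q': "tsum_tuples (length ds) (\<lambda>ls. const_ser (\<lambda>v. of_nat (bb ds ls) * mon (zw (rev (ladd ds ls))) v)) n = Q"
    by (rule ext) (simp add: tsum_const Q_def)
  have finQ: "finite (supp Q)"
  proof (rule finite_subset)
    show "supp Q \<subseteq> (\<lambda>ls. zw (rev (ladd ds ls))) ` tuples (length ds) n"
    proof
      fix v assume "v \<in> supp Q"
      then have "Q v \<noteq> 0" by (simp add: supp_def)
      then obtain ls where "ls \<in> tuples (length ds) n" "mon (zw (rev (ladd ds ls))) v \<noteq> 0"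
        unfolding Q_def by (metis (mono_tags, lifting) mult_zero_right sum.neutral)
      then show "v \<in> (\<lambda>ls. zw (rev (ladd ds ls))) ` tuples (length ds) n" by (auto simp: mon_def split: if_splits)
    qed
  qed (simp add: finite_tuples)
  have TbQ: "fps_nth (Tb ds v) n = (-1) ^ wt ds * Q v" for v
    using Tb_nth[OF p] by (simp add: Q_def)
  have "(-1) ^ wt ds * shS (const_ser (mon p)) (tsum_tuples (length ds) (\<lambda>ls. const_ser (\<lambda>v. of_nat (bb ds ls) * mon (zw (rev (ladd ds ls))) v))) n w
     = (\<Sum>v::word\<in>supp Q. fps_nth (Tb ds v) n * of_nat (count_list (shw p v) w))"
    unfolding shS_const Q' sh_mon TbQ by (simp add: sum_distrib_left mult.assoc)
  also have "\<dots> = (\<Sum>v::word\<in>{v::word. length v \<le> length w}. fps_nth (Tb ds v) n * of_nat (count_list (shw p v) w))"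
  proof (rule sum_reconcile[OF finQ finite_W])
    fix v assume "v \<notin> {v::word. length v \<le> length w}"
    then have "count_list (shw p v) w = 0" using cnt_len by fastforce
    then show "fps_nth (Tb ds v) n * of_nat (count_list (shw p v) w) = 0" by simp
  next
    fix v assume "v \<notin> supp Q"
    then show "fps_nth (Tb ds v) n * of_nat (count_list (shw p v) w) = 0" by (simp add: TbQ supp_def)
  qed
  also have "\<dots> = fps_nth (shuf (dlt p) (Tb ds) w) n"
    by (simp add: shuf_expand2[of _ "Tb ds"] fps_sum_nth shuf_dlt_cnt)
  finally show ?thesis .
qed

lemma PI: "pos qs \<Longrightarrow> phihat_idx qs n w = fps_nth (Phi (dlt (zw qs)) w) n"
proof -
  assume p: "pos qs"
  have "phihat_idx qs n w = (\<Sum>i\<le>length qs. fps_nth (shuf (dlt (zw (take i qs))) (Tb (drop i qs)) w) n)"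
    unfolding phihat_idx_def
  proof (rule sum.cong[OF refl])
    fix i assume "i \<in> {..length qs}"
    show "(-1) ^ wt (drop i qs) * shS (const_ser (mon (zw (take i qs))))
         (tsum_tuples (length qs - i)
           (\<lambda>ls. const_ser (\<lambda>v. of_nat (bb (drop i qs) ls) * mon (zw (rev (ladd (drop i qs) ls))) v))) n w
       = fps_nth (shuf (dlt (zw (take i qs))) (Tb (drop i qs)) w) n"
      using TT_term[OF pos_drop[OF p], of i "zw (take i qs)" n w] by simp
  qed
  also have "\<dots> = fps_nth (Phi (dlt (zw qs)) w) n"
    by (simp add: PhiZ[OF p] fps_sum_nth)
  finally show ?thesis .
qed



lemma mult_if1: "(if c then (1::'a::semiring_1) else 0) * x = (if c then x else 0)" by simp

lemma catTb: "pos ls \<Longrightarrow> fps_nth (cat (dlt p) (Tb ls) u) m =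
   (-1) ^ wt ls * (\<Sum>ls'\<in>tuples (length ls) m. of_nat (bb ls ls') * (if u = p @ zw (rev (ladd ls ls')) then 1 else 0))"
proof (cases "take (length p) u = p")
  case True
  assume pl: "pos ls"
  have e: "(drop (length p) u = B) = (u = p @ B)" for B
    using True by (metis append_eq_conv_conj)
  show ?thesis using True by (simp add: cat_dlt1 Tb_nth[OF pl] mon_def e)
next
  case False
  then have "u \<noteq> p @ B" for B by auto
  then show ?thesis using False by (simp add: cat_dlt1)
qed

lemma pos_ladd: "pos ls \<Longrightarrow> pos (ladd ls ls')"
  by (auto simp: pos_def ladd_def set_zip)

lemma Phi_catTb: "pos ls \<Longrightarrow> fps_nth (Phi (cat (dlt p) (Tb ls)) w) n =
  (-1) ^ wt ls * (\<Sum>m\<le>n. \<Sum>ls'\<in>tuples (length ls) m. of_nat (bb ls ls') * fps_nth (Phi (dlt (p @ zw (rev (ladd ls ls')))) w) (n - m))"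
proof -
  assume pl: "pos ls"
  let ?W = "{u::word. length u \<le> length w}"
  let ?Q = "\<lambda>ls'. p @ zw (rev (ladd ls ls'))"
  let ?G = "\<lambda>u k. fps_nth (Phi (dlt u) w) k"
  have "fps_nth (Phi (cat (dlt p) (Tb ls)) w) n = (\<Sum>u\<in>?W. \<Sum>m\<le>n. fps_nth (cat (dlt p) (Tb ls) u) m * ?G u (n - m))"
    by (simp add: Phi_expand[of "cat (dlt p) (Tb ls)"] fps_sum_nth fps_mult_nth atLeast0AtMost)
  also have "\<dots> = (\<Sum>u\<in>?W. \<Sum>m\<le>n. \<Sum>ls'\<in>tuples (length ls) m. (-1) ^ wt ls * of_nat (bb ls ls') * (if u = ?Q ls' then ?G u (n - m) else 0))"
    by (simp add: catTb[OF pl] sum_distrib_left sum_distrib_right mult.assoc mult_if1 cong: if_cong)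
  also have "\<dots> = (\<Sum>m\<le>n. \<Sum>ls'\<in>tuples (length ls) m. \<Sum>u\<in>?W. (-1) ^ wt ls * of_nat (bb ls ls') * (if u = ?Q ls' then ?G u (n - m) else 0))"
    by (subst sum.swap) (simp add: sum.swap[of _ ?W])
  also have "\<dots> = (\<Sum>m\<le>n. \<Sum>ls'\<in>tuples (length ls) m. (-1) ^ wt ls * of_nat (bb ls ls') * ?G (?Q ls') (n - m))"
  proof (intro sum.cong refl)
    fix m ls'
    have "(\<Sum>u\<in>?W. (if u = ?Q ls' then ?G u (n - m) else 0)) = ?G (?Q ls') (n - m)"
    proof (cases "?Q ls' \<in> ?W")
      case True then show ?thesis by (simp add: sum.delta finite_W)
    next
      case False
      then have "?G (?Q ls') (n - m) = 0" by (simp add: Phi_dlt_long)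
      then show ?thesis using False by (simp add: sum.delta finite_W)
    qed
    then show "(\<Sum>u\<in>?W. (-1) ^ wt ls * of_nat (bb ls ls') * (if u = ?Q ls' then ?G u (n - m) else 0))
       = (-1) ^ wt ls * of_nat (bb ls ls') * ?G (?Q ls') (n - m)"
      by (simp add: sum_distrib_left[symmetric])
  qed
  also have "\<dots> = (-1) ^ wt ls * (\<Sum>m\<le>n. \<Sum>ls'\<in>tuples (length ls) m. of_nat (bb ls ls') * ?G (?Q ls') (n - m))"
    by (simp add: sum_distrib_left mult.assoc)
  finally show ?thesis .
qed

lemma phihat_mon: "pos qs \<Longrightarrow> phihat (const_ser (mon (zw qs))) k w = fps_nth (Phi (dlt (zw qs)) w) k"
  unfolding phihat_const supp_mon by (simp add: mon_def idx_zw PI)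

lemma LHS_eq:
  assumes pk: "pos ks" and pl: "pos ls"
  shows "phihat (const_ser (sh (mon (zw ks)) (mon (zw ls)))) n w = fps_nth (Phi (shuf (dlt (zw ks)) (dlt (zw ls))) w) n"
proof -
  let ?p = "zw ks" and ?q = "zw ls"
  define P where "P = sh (mon ?p) (mon ?q)"
  have P: "P u = of_nat (count_list (shw ?p ?q) u)" for u
    unfolding P_def sh_mon supp_mon by (simp add: mon_def)
  let ?W = "{u::word. length u \<le> length w}"
  have finP: "finite (supp P)"
    by (rule finite_subset[of _ "set (shw ?p ?q)"]) (auto simp: supp_def P count_list_0_iff)
  have "phihat (const_ser P) n w = (\<Sum>u\<in>supp P. P u * phihat_idx (idx u) n w)"
    by (rule phihat_const)
  also have "\<dots> = (\<Sum>u\<in>supp P. P u * fps_nth (Phi (dlt u) w) n)"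
  proof (rule sum.cong[OF refl])
    fix u assume "u \<in> supp P"
    then have "count_list (shw ?p ?q) u \<noteq> 0" by (simp add: supp_def P)
    then have "hy u" by (rule shw_hy[OF hy_zw hy_zw])
    then have u: "zw (bl u) = u" "pos (bl u)" using zw_bl by auto
    have "phihat_idx (idx u) n w = fps_nth (Phi (dlt u) w) n"
      using PI[OF u(2), of n w] idx_zw[OF u(2)] u(1) by simp
    then show "P u * phihat_idx (idx u) n w = P u * fps_nth (Phi (dlt u) w) n" by simp
  qed
  also have "\<dots> = (\<Sum>u\<in>?W. P u * fps_nth (Phi (dlt u) w) n)"
  proof (rule sum_reconcile[OF finP finite_W])
    fix u assume "u \<notin> ?W"
    then show "P u * fps_nth (Phi (dlt u) w) n = 0" by (simp add: Phi_dlt_long)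
  next
    fix u assume "u \<notin> supp P"
    then show "P u * fps_nth (Phi (dlt u) w) n = 0" by (simp add: supp_def)
  qed
  also have "\<dots> = fps_nth (Phi (shuf (dlt ?p) (dlt ?q)) w) n"
    by (simp add: Phi_expand[of "shuf (dlt ?p) (dlt ?q)"] fps_sum_nth shuf_dlt_cnt P)
  finally show ?thesis unfolding P_def .
qed

theorem mainTheorem6:
  fixes ks ls :: "nat list"
  assumes "\<forall>k\<in>set ks. 0 < k" and "\<forall>l\<in>set ls. 0 < l"
  shows "phihat (const_ser (sh (mon (zw ks)) (mon (zw ls)))) =
           (\<lambda>n w. (- 1) ^ wt ls *
              tsum_tuples (length ls)
                (\<lambda>ls'. (\<lambda>m v. of_nat (bb ls ls') *
                   phihat (const_ser (mon (zw ks @ zw (rev (ladd ls ls'))))) m v)) n w)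
       \<and> phi (sh (mon (zw ks)) (mon (zw ls))) =
           (\<lambda>w. (- 1) ^ wt ls * phi (mon (zw ks @ zw (rev ls))) w)"
proof -
  have pk: "pos ks" and pl: "pos ls" using assms by (auto simp: pos_def)
  have posQ: "pos (ks @ rev (ladd ls ls'))" for ls'
    using pk pos_ladd[OF pl, of ls'] by (auto simp: pos_def)
  have first: "phihat (const_ser (sh (mon (zw ks)) (mon (zw ls)))) n w =
      (- 1) ^ wt ls * tsum_tuples (length ls)
                (\<lambda>ls'. (\<lambda>m v. of_nat (bb ls ls') *
                   phihat (const_ser (mon (zw ks @ zw (rev (ladd ls ls'))))) m v)) n w" for n w
  proof -
    have "phihat (const_ser (sh (mon (zw ks)) (mon (zw ls)))) n w = fps_nth (Phi (cat (dlt (zw ks)) (Tb ls)) w) n"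
      by (simp add: LHS_eq[OF pk pl] main_ser2)
    also have "\<dots> = (-1) ^ wt ls * (\<Sum>m\<le>n. \<Sum>ls'\<in>tuples (length ls) m. of_nat (bb ls ls') * fps_nth (Phi (dlt (zw ks @ zw (rev (ladd ls ls')))) w) (n - m))"
      by (rule Phi_catTb[OF pl])
    also have "\<dots> = (- 1) ^ wt ls * tsum_tuples (length ls)
                (\<lambda>ls'. (\<lambda>m v. of_nat (bb ls ls') *
                   phihat (const_ser (mon (zw ks @ zw (rev (ladd ls ls'))))) m v)) n w"
      unfolding tsum_tuples_def
      by (simp add: zw_append[symmetric] phihat_mon[OF posQ])
    finally show ?thesis .
  qed
  moreover have "phi (sh (mon (zw ks)) (mon (zw ls))) w = (- 1) ^ wt ls * phi (mon (zw ks @ zw (rev ls))) w" for w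
  proof -
    have t0: "tuples (length ls) 0 = {replicate (length ls) 0}"
      by (auto simp: tuples_def intro: replicate_eqI)
    have bb0: "bb ls (replicate (length ls) 0) = 1" for ls
      by (induction ls) (simp_all add: bb_def)
    have la0: "ladd ls (replicate (length ls) 0) = ls" for ls
      by (induction ls) (simp_all add: ladd_def)
    show ?thesis unfolding phi_def first
      by (simp add: tsum_tuples_def t0 bb0 la0)
  qed
  ultimately show ?thesis by auto
qed


end
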